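(* Let $\mathcal G$ be a topological $2$-group, $X$ a topological space, $\mathcal U=\{U_i\}_{i\in I}$ an open cover of $X$, and let $c,c'$ be $\mathcal G$-valued Čech cocycles subordinate to $\mathcal U$. Then $c$ and $c'$ are cohomologous if and only if there is a $\mathcal G$-bundle morphism between $\pi_c$ and $\pi_{c'}$.
   Context: Notation: topological $2$-groups $\mathcal G=(\mathcal G_1\rightrightarrows\mathcal G_0)$ (groupoids internal to topological groups, product $g*h=h1_{t(g)^{-1}}g$), $\mathcal E=\mathrm{Ker}(s)$ with ${}^xe=1_xe1_{x^{-1}}$; $U_{i_1\cdots i_n}=U_{i_1}\cap\dots\cap U_{i_n}$. A $\mathcal G$-valued Čech cocycle subordinate to $\mathcal U$ is $c=(\mathbf x,\mathbf e)$, $\mathbf x_{ij}\colon U_{ij}\to\mathcal G_0$, $\mathbf e_{ijk}\colon U_{ijk}\to\mathcal E$ continuous, with $t(\mathbf e_{ijk})\mathbf x_{ij}\mathbf x_{jk}=\mathbf x_{ik}$ and $\mathbf e_{ikl}\mathbf e_{ijk}=\mathbf e_{ijl}\,{}^{\mathbf x_{ij}}\mathbf e_{jkl}$. Cocycles $(\mathbf x,\mathbf e)$, $(\mathbf x',\mathbf e')$ are cohomologous if there are continuous $a_i\colon U_i\to\mathcal G_0$, $d_{ij}\colon U_{ij}\to\mathcal E$ with $\mathbf x'_{ij}=a_it(d_{ij})\mathbf x_{ij}a_j^{-1}$ on $U_{ij}$ and $\mathbf e'_{ijk}={}^{a_i}\bigl(d_{ik}\mathbf e_{ijk}\,{}^{\mathbf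 x_{ij}}(d_{jk}^{-1})d_{ij}^{-1}\bigr)$ on $U_{ijk}$. To a cocycle $c$ is associated the principal $\mathcal G$-bundle $\pi_c\colon P_c\to\overline X$: $P_0=\coprod_iU_i\times\mathcal G_0$, $P_1=\coprod_{i,j}U_{ij}\times\mathcal G_1$, $s((v,g)_{ij})=(v,s(g))_i$, $t((v,g)_{ij})=(v,\mathbf x_{ij}(v)^{-1}t(g))_j$, $(v,g)_{ij}*(v,h)_{jk}=(v,\mathbf e_{ijk}(v)(g*(1_{\mathbf x_{ij}(v)}h)))_{ik}$, right $\mathcal G$-action by right multiplication in the second coordinate, $\pi_c$ the projection to $X$ ($\overline X=(X\rightrightarrows X)$). A $\mathcal G$-bundle morphism from $\pi\colon P\to\overline X$ to $\pi'\colon P'\to\overline X$ is a $\mathcal G$-equivariant continuous functor $f\colon P\to P'$ with $\pi'f=\pi$. *)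

theory Defs
  imports "HOL-Analysis.Analysis" "HOL-Algebra.Group"
begin

definition topological_group :: "'a monoid \<Rightarrow> 'a topology \<Rightarrow> bool" where
  "topological_group G T \<longleftrightarrow> group G \<and> topspace T = carrier G
     \<and> continuous_map (prod_topology T T) T (\<lambda>p. fst p \<otimes>\<^bsub>G\<^esub> snd p)
     \<and> continuous_map T T (\<lambda>x. inv\<^bsub>G\<^esub> x)"

text \<open>Composition is diagrammatic: cmp g h is defined when tgt g = src h.\<close>

record ('a, 'b) two_group =
  G0 :: "'a monoid"
  T0 :: "'a topology"
  G1 :: "'b monoid"
  T1 :: "'b topology"
  src :: "'b \<Rightarrow> 'a"
  tgt :: "'b \<Rightarrow> 'a"
  idn :: "'a \<Rightarrow> 'b"
  cmp :: "'b \<Rightarrow> 'b \<Rightarrow> 'b"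
  ginv :: "'b \<Rightarrow> 'b"

definition comp_pairs :: "('a, 'b) two_group \<Rightarrow> ('b \<times> 'b) set" where
  "comp_pairs \<Gamma> = {(g, h). g \<in> carrier (G1 \<Gamma>) \<and> h \<in> carrier (G1 \<Gamma>) \<and> tgt \<Gamma> g = src \<Gamma> h}"

definition topological_2group :: "('a, 'b) two_group \<Rightarrow> bool" where
  "topological_2group \<Gamma> \<longleftrightarrow>
     topological_group (G0 \<Gamma>) (T0 \<Gamma>) \<and> topological_group (G1 \<Gamma>) (T1 \<Gamma>)
   \<comment> \<open>structure maps are homomorphisms\<close>
   \<and> src \<Gamma> \<in> hom (G1 \<Gamma>) (G0 \<Gamma>) \<and> tgt \<Gamma> \<in> hom (G1 \<Gamma>) (G0 \<Gamma>)
   \<and> idn \<Gamma> \<in> hom (G0 \<Gamma>) (G1 \<Gamma>) \<and> ginv \<Gamma> \<in> hom (G1 \<Gamma>) (G1 \<Gamma>)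
   \<and> (\<forall>(g, h) \<in> comp_pairs \<Gamma>. cmp \<Gamma> g h \<in> carrier (G1 \<Gamma>))
   \<and> (\<forall>(g, h) \<in> comp_pairs \<Gamma>. \<forall>(g', h') \<in> comp_pairs \<Gamma>.
        cmp \<Gamma> (g \<otimes>\<^bsub>G1 \<Gamma>\<^esub> g') (h \<otimes>\<^bsub>G1 \<Gamma>\<^esub> h')
          = cmp \<Gamma> g h \<otimes>\<^bsub>G1 \<Gamma>\<^esub> cmp \<Gamma> g' h')
   \<comment> \<open>structure maps are continuous\<close>
   \<and> continuous_map (T1 \<Gamma>) (T0 \<Gamma>) (src \<Gamma>) \<and> continuous_map (T1 \<Gamma>) (T0 \<Gamma>) (tgt \<Gamma>)
   \<and> continuous_map (T0 \<Gamma>) (T1 \<Gamma>) (idn \<Gamma>) \<and> continuous_map (T1 \<Gamma>) (T1 \<Gamma>) (ginv \<Gamma>)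
   \<and> continuous_map (subtopology (prod_topology (T1 \<Gamma>) (T1 \<Gamma>)) (comp_pairs \<Gamma>)) (T1 \<Gamma>)
        (\<lambda>p. cmp \<Gamma> (fst p) (snd p))
   \<comment> \<open>groupoid axioms\<close>
   \<and> (\<forall>x \<in> carrier (G0 \<Gamma>). src \<Gamma> (idn \<Gamma> x) = x \<and> tgt \<Gamma> (idn \<Gamma> x) = x)
   \<and> (\<forall>(g, h) \<in> comp_pairs \<Gamma>. src \<Gamma> (cmp \<Gamma> g h) = src \<Gamma> g \<and> tgt \<Gamma> (cmp \<Gamma> g h) = tgt \<Gamma> h)
   \<and> (\<forall>g \<in> carrier (G1 \<Gamma>). cmp \<Gamma> (idn \<Gamma> (src \<Gamma> g)) g = g \<and> cmp \<Gamma> g (idn \<Gamma> (tgt \<Gamma> g)) = g)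
   \<and> (\<forall>f \<in> carrier (G1 \<Gamma>). \<forall>g \<in> carrier (G1 \<Gamma>). \<forall>h \<in> carrier (G1 \<Gamma>).
        tgt \<Gamma> f = src \<Gamma> g \<longrightarrow> tgt \<Gamma> g = src \<Gamma> h \<longrightarrow>
        cmp \<Gamma> (cmp \<Gamma> f g) h = cmp \<Gamma> f (cmp \<Gamma> g h))
   \<and> (\<forall>g \<in> carrier (G1 \<Gamma>). src \<Gamma> (ginv \<Gamma> g) = tgt \<Gamma> g \<and> tgt \<Gamma> (ginv \<Gamma> g) = src \<Gamma> g
        \<and> cmp \<Gamma> g (ginv \<Gamma> g) = idn \<Gamma> (src \<Gamma> g) \<and> cmp \<Gamma> (ginv \<Gamma> g) g = idn \<Gamma> (tgt \<Gamma> g))"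

definition kerE :: "('a, 'b) two_group \<Rightarrow> 'b set" where
  "kerE \<Gamma> = {g \<in> carrier (G1 \<Gamma>). src \<Gamma> g = \<one>\<^bsub>G0 \<Gamma>\<^esub>}"

definition conjact :: "('a, 'b) two_group \<Rightarrow> 'a \<Rightarrow> 'b \<Rightarrow> 'b" where
  "conjact \<Gamma> x e = idn \<Gamma> x \<otimes>\<^bsub>G1 \<Gamma>\<^esub> e \<otimes>\<^bsub>G1 \<Gamma>\<^esub> idn \<Gamma> (inv\<^bsub>G0 \<Gamma>\<^esub> x)"

definition open_cover :: "'x topology \<Rightarrow> 'i set \<Rightarrow> ('i \<Rightarrow> 'x set) \<Rightarrow> bool" where
  "open_cover X I U \<longleftrightarrow> (\<forall>i \<in> I. openin X (U i)) \<and> (\<Union>i \<in> I. U i) = topspace X"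

definition cech_cocycle ::
  "('a, 'b) two_group \<Rightarrow> 'x topology \<Rightarrow> 'i set \<Rightarrow> ('i \<Rightarrow> 'x set)
     \<Rightarrow> ('i \<Rightarrow> 'i \<Rightarrow> 'x \<Rightarrow> 'a) \<times> ('i \<Rightarrow> 'i \<Rightarrow> 'i \<Rightarrow> 'x \<Rightarrow> 'b) \<Rightarrow> bool" where
  "cech_cocycle \<Gamma> X I U c \<longleftrightarrow>
     (\<forall>i \<in> I. \<forall>j \<in> I. continuous_map (subtopology X (U i \<inter> U j)) (T0 \<Gamma>) (fst c i j))
   \<and> (\<forall>i \<in> I. \<forall>j \<in> I. \<forall>k \<in> I.
        continuous_map (subtopology X (U i \<inter> U j \<inter> U k)) (subtopology (T1 \<Gamma>) (kerE \<Gamma>)) (snd c i j k))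
   \<and> (\<forall>i \<in> I. \<forall>j \<in> I. \<forall>k \<in> I. \<forall>v \<in> U i \<inter> U j \<inter> U k.
        tgt \<Gamma> (snd c i j k v) \<otimes>\<^bsub>G0 \<Gamma>\<^esub> fst c i j v \<otimes>\<^bsub>G0 \<Gamma>\<^esub> fst c j k v = fst c i k v)
   \<and> (\<forall>i \<in> I. \<forall>j \<in> I. \<forall>k \<in> I. \<forall>l \<in> I. \<forall>v \<in> U i \<inter> U j \<inter> U k \<inter> U l.
        snd c i k l v \<otimes>\<^bsub>G1 \<Gamma>\<^esub> snd c i j k v
          = snd c i j l v \<otimes>\<^bsub>G1 \<Gamma>\<^esub> conjact \<Gamma> (fst c i j v) (snd c j k l v))"

definition cohomologous ::
  "('a, 'b) two_group \<Rightarrow> 'x topology \<Rightarrow> 'i set \<Rightarrow> ('i \<Rightarrow> 'x set)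
     \<Rightarrow> ('i \<Rightarrow> 'i \<Rightarrow> 'x \<Rightarrow> 'a) \<times> ('i \<Rightarrow> 'i \<Rightarrow> 'i \<Rightarrow> 'x \<Rightarrow> 'b)
     \<Rightarrow> ('i \<Rightarrow> 'i \<Rightarrow> 'x \<Rightarrow> 'a) \<times> ('i \<Rightarrow> 'i \<Rightarrow> 'i \<Rightarrow> 'x \<Rightarrow> 'b) \<Rightarrow> bool" where
  "cohomologous \<Gamma> X I U c c' \<longleftrightarrow>
     (\<exists>(a :: 'i \<Rightarrow> 'x \<Rightarrow> 'a) (d :: 'i \<Rightarrow> 'i \<Rightarrow> 'x \<Rightarrow> 'b).
        (\<forall>i \<in> I. continuous_map (subtopology X (U i)) (T0 \<Gamma>) (a i))
      \<and> (\<forall>i \<in> I. \<forall>j \<in> I.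
           continuous_map (subtopology X (U i \<inter> U j)) (subtopology (T1 \<Gamma>) (kerE \<Gamma>)) (d i j))
      \<and> (\<forall>i \<in> I. \<forall>j \<in> I. \<forall>v \<in> U i \<inter> U j.
           fst c' i j v = a i v \<otimes>\<^bsub>G0 \<Gamma>\<^esub> tgt \<Gamma> (d i j v) \<otimes>\<^bsub>G0 \<Gamma>\<^esub> fst c i j v
                            \<otimes>\<^bsub>G0 \<Gamma>\<^esub> inv\<^bsub>G0 \<Gamma>\<^esub> (a j v))
      \<and> (\<forall>i \<in> I. \<forall>j \<in> I. \<forall>k \<in> I. \<forall>v \<in> U i \<inter> U j \<inter> U k.
           snd c' i j k v = conjact \<Gamma> (a i v)
             (d i k v \<otimes>\<^bsub>G1 \<Gamma>\<^esub> snd c i j k v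
                \<otimes>\<^bsub>G1 \<Gamma>\<^esub> conjact \<Gamma> (fst c i j v) (inv\<^bsub>G1 \<Gamma>\<^esub> (d j k v))
                \<otimes>\<^bsub>G1 \<Gamma>\<^esub> inv\<^bsub>G1 \<Gamma>\<^esub> (d i j v))))"

text \<open>Objects: (i, (v, g)) with i in I, v in U i, g in G0  (coproduct of U_i x G0).
  Arrows: ((i, j), (v, g)) with (i,j) in I x I, v in U_ij, g in G1.\<close>

definition P0_top :: "('a, 'b) two_group \<Rightarrow> 'x topology \<Rightarrow> 'i set \<Rightarrow> ('i \<Rightarrow> 'x set)
     \<Rightarrow> ('i \<times> ('x \<times> 'a)) topology" where
  "P0_top \<Gamma> X I U = sum_topology (\<lambda>i. prod_topology (subtopology X (U i)) (T0 \<Gamma>)) I"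

definition P1_top :: "('a, 'b) two_group \<Rightarrow> 'x topology \<Rightarrow> 'i set \<Rightarrow> ('i \<Rightarrow> 'x set)
     \<Rightarrow> (('i \<times> 'i) \<times> ('x \<times> 'b)) topology" where
  "P1_top \<Gamma> X I U =
     sum_topology (\<lambda>(i, j). prod_topology (subtopology X (U i \<inter> U j)) (T1 \<Gamma>)) (I \<times> I)"

definition P_src :: "('a, 'b) two_group
     \<Rightarrow> ('i \<Rightarrow> 'i \<Rightarrow> 'x \<Rightarrow> 'a) \<times> ('i \<Rightarrow> 'i \<Rightarrow> 'i \<Rightarrow> 'x \<Rightarrow> 'b)
     \<Rightarrow> ('i \<times> 'i) \<times> ('x \<times> 'b) \<Rightarrow> 'i \<times> ('x \<times> 'a)" where
  "P_src \<Gamma> c p = (case p of ((i, j), (v, g)) \<Rightarrow> (i, (v, src \<Gamma> g)))"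

definition P_tgt :: "('a, 'b) two_group
     \<Rightarrow> ('i \<Rightarrow> 'i \<Rightarrow> 'x \<Rightarrow> 'a) \<times> ('i \<Rightarrow> 'i \<Rightarrow> 'i \<Rightarrow> 'x \<Rightarrow> 'b)
     \<Rightarrow> ('i \<times> 'i) \<times> ('x \<times> 'b) \<Rightarrow> 'i \<times> ('x \<times> 'a)" where
  "P_tgt \<Gamma> c p = (case p of ((i, j), (v, g)) \<Rightarrow>
      (j, (v, inv\<^bsub>G0 \<Gamma>\<^esub> (fst c i j v) \<otimes>\<^bsub>G0 \<Gamma>\<^esub> tgt \<Gamma> g)))"

definition P_cmp :: "('a, 'b) two_group
     \<Rightarrow> ('i \<Rightarrow> 'i \<Rightarrow> 'x \<Rightarrow> 'a) \<times> ('i \<Rightarrow> 'i \<Rightarrow> 'i \<Rightarrow> 'x \<Rightarrow> 'b)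
     \<Rightarrow> ('i \<times> 'i) \<times> ('x \<times> 'b) \<Rightarrow> ('i \<times> 'i) \<times> ('x \<times> 'b) \<Rightarrow> ('i \<times> 'i) \<times> ('x \<times> 'b)" where
  "P_cmp \<Gamma> c p q = (case p of ((i, j), (v, g)) \<Rightarrow> case q of ((j', k), (v', h)) \<Rightarrow>
      ((i, k), (v, snd c i j k v \<otimes>\<^bsub>G1 \<Gamma>\<^esub>
                   cmp \<Gamma> g (idn \<Gamma> (fst c i j v) \<otimes>\<^bsub>G1 \<Gamma>\<^esub> h))))"

definition P0_act :: "('a, 'b) two_group \<Rightarrow> 'i \<times> ('x \<times> 'a) \<Rightarrow> 'a \<Rightarrow> 'i \<times> ('x \<times> 'a)" where
  "P0_act \<Gamma> p y = (case p of (i, (v, g)) \<Rightarrow> (i, (v, g \<otimes>\<^bsub>G0 \<Gamma>\<^esub> y)))"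

definition P1_act :: "('a, 'b) two_group \<Rightarrow> ('i \<times> 'i) \<times> ('x \<times> 'b) \<Rightarrow> 'b
     \<Rightarrow> ('i \<times> 'i) \<times> ('x \<times> 'b)" where
  "P1_act \<Gamma> q h = (case q of (ij, (v, g)) \<Rightarrow> (ij, (v, g \<otimes>\<^bsub>G1 \<Gamma>\<^esub> h)))"

definition P0_proj :: "'i \<times> ('x \<times> 'a) \<Rightarrow> 'x" where
  "P0_proj p = fst (snd p)"

definition P1_proj :: "('i \<times> 'i) \<times> ('x \<times> 'b) \<Rightarrow> 'x" where
  "P1_proj q = fst (snd q)"

definition bundle_morphism ::
  "('a, 'b) two_group \<Rightarrow> 'x topology \<Rightarrow> 'i set \<Rightarrow> ('i \<Rightarrow> 'x set)
     \<Rightarrow> ('i \<Rightarrow> 'i \<Rightarrow> 'x \<Rightarrow> 'a) \<times> ('i \<Rightarrow> 'i \<Rightarrow> 'i \<Rightarrow> 'x \<Rightarrow> 'b)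
     \<Rightarrow> ('i \<Rightarrow> 'i \<Rightarrow> 'x \<Rightarrow> 'a) \<times> ('i \<Rightarrow> 'i \<Rightarrow> 'i \<Rightarrow> 'x \<Rightarrow> 'b)
     \<Rightarrow> ('i \<times> ('x \<times> 'a) \<Rightarrow> 'i \<times> ('x \<times> 'a))
     \<Rightarrow> (('i \<times> 'i) \<times> ('x \<times> 'b) \<Rightarrow> ('i \<times> 'i) \<times> ('x \<times> 'b)) \<Rightarrow> bool" where
  "bundle_morphism \<Gamma> X I U c c' f0 f1 \<longleftrightarrow>
     continuous_map (P0_top \<Gamma> X I U) (P0_top \<Gamma> X I U) f0
   \<and> continuous_map (P1_top \<Gamma> X I U) (P1_top \<Gamma> X I U) f1
   \<and> (\<forall>q \<in> topspace (P1_top \<Gamma> X I U).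
        P_src \<Gamma> c' (f1 q) = f0 (P_src \<Gamma> c q) \<and> P_tgt \<Gamma> c' (f1 q) = f0 (P_tgt \<Gamma> c q))
   \<and> (\<forall>p \<in> topspace (P1_top \<Gamma> X I U). \<forall>q \<in> topspace (P1_top \<Gamma> X I U).
        P_tgt \<Gamma> c p = P_src \<Gamma> c q \<longrightarrow> f1 (P_cmp \<Gamma> c p q) = P_cmp \<Gamma> c' (f1 p) (f1 q))
   \<and> (\<forall>p \<in> topspace (P0_top \<Gamma> X I U). \<forall>y \<in> carrier (G0 \<Gamma>).
        f0 (P0_act \<Gamma> p y) = P0_act \<Gamma> (f0 p) y)
   \<and> (\<forall>q \<in> topspace (P1_top \<Gamma> X I U). \<forall>h \<in> carrier (G1 \<Gamma>).
        f1 (P1_act \<Gamma> q h) = P1_act \<Gamma> (f1 q) h)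
   \<and> (\<forall>p \<in> topspace (P0_top \<Gamma> X I U). P0_proj (f0 p) = P0_proj p)
   \<and> (\<forall>q \<in> topspace (P1_top \<Gamma> X I U). P1_proj (f1 q) = P1_proj q)"

end

theory Submission
  imports Defs
begin

locale tg =
  fixes \<Gamma> :: "('a, 'b) two_group"
  assumes tg: "topological_2group \<Gamma>"
begin

abbreviation m0 (infixl "\<cdot>" 70) where "m0 x y \<equiv> x \<otimes>\<^bsub>G0 \<Gamma>\<^esub> y"
abbreviation m1 (infixl "\<diamondop>" 70) where "m1 x y \<equiv> x \<otimes>\<^bsub>G1 \<Gamma>\<^esub> y"
abbreviation "i0 \<equiv> m_inv (G0 \<Gamma>)"
abbreviation "i1 \<equiv> m_inv (G1 \<Gamma>)"
abbreviation "e0 \<equiv> one (G0 \<Gamma>)"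
abbreviation "e1 \<equiv> one (G1 \<Gamma>)"
abbreviation "C0 \<equiv> carrier (G0 \<Gamma>)"
abbreviation "C1 \<equiv> carrier (G1 \<Gamma>)"
abbreviation "s \<equiv> src \<Gamma>"
abbreviation "t \<equiv> tgt \<Gamma>"
abbreviation "\<iota> \<equiv> idn \<Gamma>"

lemma grp0: "group (G0 \<Gamma>)" and grp1: "group (G1 \<Gamma>)"
  using tg by (auto simp: topological_2group_def topological_group_def)

sublocale A: group "G0 \<Gamma>" by (rule grp0)
sublocale B: group "G1 \<Gamma>" by (rule grp1)

lemma homs: "s \<in> hom (G1 \<Gamma>) (G0 \<Gamma>)" "t \<in> hom (G1 \<Gamma>) (G0 \<Gamma>)" "\<iota> \<in> hom (G0 \<Gamma>) (G1 \<Gamma>)"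
  using tg by (auto simp: topological_2group_def)

lemma gh: "group_hom (G1 \<Gamma>) (G0 \<Gamma>) s" "group_hom (G1 \<Gamma>) (G0 \<Gamma>) t" "group_hom (G0 \<Gamma>) (G1 \<Gamma>) \<iota>"
  using homs grp0 grp1 by (auto simp: group_hom_def group_hom_axioms_def)

lemma s_closed[simp]: "g \<in> C1 \<Longrightarrow> s g \<in> C0" using group_hom.hom_closed[OF gh(1)] by blast
lemma t_closed[simp]: "g \<in> C1 \<Longrightarrow> t g \<in> C0" using group_hom.hom_closed[OF gh(2)] by blast
lemma i_closed[simp]: "x \<in> C0 \<Longrightarrow> \<iota> x \<in> C1" using group_hom.hom_closed[OF gh(3)] by blast
lemma s_mult[simp]: "g \<in> C1 \<Longrightarrow> h \<in> C1 \<Longrightarrow> s (g \<diamondop> h) = s g \<cdot> s h" using group_hom.hom_mult[OF gh(1)] by blast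
lemma t_mult[simp]: "g \<in> C1 \<Longrightarrow> h \<in> C1 \<Longrightarrow> t (g \<diamondop> h) = t g \<cdot> t h" using group_hom.hom_mult[OF gh(2)] by blast
lemma i_mult[simp]: "x \<in> C0 \<Longrightarrow> y \<in> C0 \<Longrightarrow> \<iota> (x \<cdot> y) = \<iota> x \<diamondop> \<iota> y" using group_hom.hom_mult[OF gh(3)] by blast
lemma s_inv[simp]: "g \<in> C1 \<Longrightarrow> s (i1 g) = i0 (s g)" using group_hom.hom_inv[OF gh(1)] by blast
lemma t_inv[simp]: "g \<in> C1 \<Longrightarrow> t (i1 g) = i0 (t g)" using group_hom.hom_inv[OF gh(2)] by blast
lemma i_inv[simp]: "x \<in> C0 \<Longrightarrow> \<iota> (i0 x) = i1 (\<iota> x)" using group_hom.hom_inv[OF gh(3)] by blast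
lemma s_one[simp]: "s e1 = e0" using group_hom.hom_one[OF gh(1)] by blast
lemma t_one[simp]: "t e1 = e0" using group_hom.hom_one[OF gh(2)] by blast
lemma i_one[simp]: "\<iota> e0 = e1" using group_hom.hom_one[OF gh(3)] by blast

lemma s_i[simp]: "x \<in> C0 \<Longrightarrow> s (\<iota> x) = x" and t_i[simp]: "x \<in> C0 \<Longrightarrow> t (\<iota> x) = x"
  using tg by (auto simp: topological_2group_def)

lemma A_cancel[simp]: "x \<in> C0 \<Longrightarrow> y \<in> C0 \<Longrightarrow> i0 x \<cdot> (x \<cdot> y) = y"
  "x \<in> C0 \<Longrightarrow> y \<in> C0 \<Longrightarrow> x \<cdot> (i0 x \<cdot> y) = y"
  by (simp_all flip: A.m_assoc)
lemma B_cancel[simp]: "x \<in> C1 \<Longrightarrow> y \<in> C1 \<Longrightarrow> i1 x \<diamondop> (x \<diamondop> y) = y"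
  "x \<in> C1 \<Longrightarrow> y \<in> C1 \<Longrightarrow> x \<diamondop> (i1 x \<diamondop> y) = y"
  by (simp_all flip: B.m_assoc)

lemmas norm = A.m_assoc B.m_assoc A.inv_mult_group B.inv_mult_group

lemma cmp_id: "g \<in> C1 \<Longrightarrow> cmp \<Gamma> (\<iota> (s g)) g = g" "g \<in> C1 \<Longrightarrow> cmp \<Gamma> g (\<iota> (t g)) = g"
  using tg by (auto simp: topological_2group_def)

lemma interchange:
  assumes "g \<in> C1" "h \<in> C1" "t g = s h" "g' \<in> C1" "h' \<in> C1" "t g' = s h'"
  shows "cmp \<Gamma> (g \<diamondop> g') (h \<diamondop> h') = cmp \<Gamma> g h \<diamondop> cmp \<Gamma> g' h'"
proof -
  have "(g,h) \<in> comp_pairs \<Gamma>" "(g',h') \<in> comp_pairs \<Gamma>" using assms by (auto simp: comp_pairs_def)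
  then show ?thesis using tg unfolding topological_2group_def by fast
qed

lemma cmp_formula:
  assumes g: "g \<in> C1" and h: "h \<in> C1" and gh: "t g = s h"
  shows "cmp \<Gamma> g h = g \<diamondop> i1 (\<iota> (t g)) \<diamondop> h"
proof -
  let ?g1 = "g \<diamondop> i1 (\<iota> (t g))"
  have "cmp \<Gamma> (?g1 \<diamondop> \<iota> (t g)) (e1 \<diamondop> h) = cmp \<Gamma> ?g1 e1 \<diamondop> cmp \<Gamma> (\<iota> (t g)) h"
    by (rule interchange) (use g h gh in auto)
  moreover have "?g1 \<diamondop> \<iota> (t g) = g" using g by (simp add: B.m_assoc)
  moreover have "cmp \<Gamma> ?g1 e1 = ?g1"
    using cmp_id(2)[of ?g1] g by simp
  moreover have "cmp \<Gamma> (\<iota> (t g)) h = h" using cmp_id(1)[of h] gh h by simp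
  ultimately show ?thesis using h by simp
qed

lemma cmp_formula2:
  assumes g: "g \<in> C1" and h: "h \<in> C1" and gh: "t g = s h"
  shows "cmp \<Gamma> g h = h \<diamondop> i1 (\<iota> (s h)) \<diamondop> g"
proof -
  let ?h1 = "h \<diamondop> i1 (\<iota> (s h))"
  have "cmp \<Gamma> (e1 \<diamondop> g) (?h1 \<diamondop> \<iota> (t g)) = cmp \<Gamma> e1 ?h1 \<diamondop> cmp \<Gamma> g (\<iota> (t g))"
    by (rule interchange) (use g h gh in auto)
  moreover have "?h1 \<diamondop> \<iota> (t g) = h" using h gh by (simp add: B.m_assoc)
  moreover have "cmp \<Gamma> e1 ?h1 = ?h1"
    using cmp_id(1)[of ?h1] h by simp
  moreover have "cmp \<Gamma> g (\<iota> (t g)) = g" using cmp_id(2)[of g] g by simp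
  ultimately show ?thesis using g by simp
qed

abbreviation "E \<equiv> kerE \<Gamma>"

lemma E_iff: "e \<in> E \<longleftrightarrow> e \<in> C1 \<and> s e = e0" by (simp add: kerE_def)

lemma peiffer:
  assumes k: "k \<in> C1" "t k = e0" and e: "e \<in> E"
  shows "k \<diamondop> e = e \<diamondop> k"
proof -
  have e': "e \<in> C1" "s e = e0" using e by (auto simp: E_iff)
  have "cmp \<Gamma> k e = k \<diamondop> e" using cmp_formula[of k e] k e' by simp
  moreover have "cmp \<Gamma> k e = e \<diamondop> k" using cmp_formula2[of k e] k e' by simp
  ultimately show ?thesis by simp
qed

lemma conj_t:
  assumes g: "g \<in> C1" and e: "e \<in> E"
  shows "g \<diamondop> e = \<iota> (t g) \<diamondop> e \<diamondop> i1 (\<iota> (t g)) \<diamondop> g"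
proof -
  have eC: "e \<in> C1" using e by (simp add: E_iff)
  let ?k = "i1 (\<iota> (t g)) \<diamondop> g"
  have k: "?k \<in> C1" "t ?k = e0" using g by auto
  have "g = \<iota> (t g) \<diamondop> ?k" using g by simp
  then have "g \<diamondop> e = \<iota> (t g) \<diamondop> (?k \<diamondop> e)" using g eC by (metis B.m_assoc i_closed k(1) t_closed)
  also have "\<dots> = \<iota> (t g) \<diamondop> (e \<diamondop> ?k)" using peiffer[OF k e] by simp
  finally show ?thesis using g eC by (simp add: B.m_assoc)
qed

lemma E_closed[simp]: "e \<in> E \<Longrightarrow> e \<in> C1" by (simp add: E_iff)
lemma E_mult[simp]: "e \<in> E \<Longrightarrow> f \<in> E \<Longrightarrow> e \<diamondop> f \<in> E" by (simp add: E_iff)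
lemma E_inv[simp]: "e \<in> E \<Longrightarrow> i1 e \<in> E" by (simp add: E_iff)
lemma E_conj[simp]: "x \<in> C1 \<Longrightarrow> f \<in> E \<Longrightarrow> x \<diamondop> (f \<diamondop> i1 x) \<in> E" by (simp add: E_iff)

lemma conjact_eq: "x \<in> C0 \<Longrightarrow> e \<in> C1 \<Longrightarrow> conjact \<Gamma> x e = \<iota> x \<diamondop> (e \<diamondop> i1 (\<iota> x))"
  by (simp add: conjact_def B.m_assoc)

end

lemma continuous_map_sum_from:
  assumes "\<And>i. i \<in> I \<Longrightarrow> continuous_map (X i) Y (\<lambda>x. f (i, x))"
  shows "continuous_map (sum_topology X I) Y f"
  unfolding continuous_map_def
proof (intro conjI allI impI)
  show "f \<in> topspace (sum_topology X I) \<rightarrow> topspace Y"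
    using assms by (force simp: continuous_map_def)
  fix V assume V: "openin Y V"
  show "openin (sum_topology X I) {x \<in> topspace (sum_topology X I). f x \<in> V}"
    unfolding openin_sum_topology
  proof (intro conjI ballI)
    fix i assume i: "i \<in> I"
    have "{x. (i, x) \<in> {x \<in> topspace (sum_topology X I). f x \<in> V}} = {x \<in> topspace (X i). f (i, x) \<in> V}"
      using i by auto
    then show "openin (X i) {x. (i, x) \<in> {x \<in> topspace (sum_topology X I). f x \<in> V}}"
      using assms[OF i] V by (simp add: continuous_map_def)
  qed auto
qed

lemma continuous_map_local:
  assumes "\<And>x. x \<in> topspace X \<Longrightarrow> \<exists>T. openin X T \<and> x \<in> T \<and> continuous_map (subtopology X T) Y f"
  shows "continuous_map X Y f"
  unfolding continuous_map_def
proof (intro conjI allI impI)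
  show "f \<in> topspace X \<rightarrow> topspace Y"
  proof
    fix x assume x: "x \<in> topspace X"
    then obtain T where "openin X T" "x \<in> T" "continuous_map (subtopology X T) Y f" using assms by blast
    then show "f x \<in> topspace Y" using x by (auto simp: continuous_map_def)
  qed
  fix V assume V: "openin Y V"
  show "openin X {x \<in> topspace X. f x \<in> V}"
  proof (subst openin_subopen, intro ballI)
    fix x assume x: "x \<in> {x \<in> topspace X. f x \<in> V}"
    then obtain T where T: "openin X T" "x \<in> T" "continuous_map (subtopology X T) Y f" using assms by blast
    then have "openin (subtopology X T) {y \<in> topspace (subtopology X T). f y \<in> V}"
      using V by (simp add: continuous_map_def)
    then have o: "openin X {y \<in> topspace X \<inter> T. f y \<in> V}" using T(1)
      by (simp add: openin_open_subtopology)
    show "\<exists>T. openin X T \<and> x \<in> T \<and> T \<subseteq> {x \<in> topspace X. f x \<in> V}"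
      by (rule exI[of _ "{y \<in> topspace X \<inter> T. f y \<in> V}"]) (use o x T in auto)
  qed
qed

lemma openin_sum_component:
  assumes "k \<in> I" shows "openin (sum_topology X I) (Sigma {k} (\<lambda>_. topspace (X k)))"
  unfolding openin_sum_topology
proof (intro conjI ballI)
  fix i assume "i \<in> I"
  show "openin (X i) {x. (i, x) \<in> Sigma {k} (\<lambda>_. topspace (X k))}"
    by (cases "i = k") auto
qed (use assms in auto)

context tg begin

lemma E_s[simp]: "e \<in> E \<Longrightarrow> s e = e0" by (simp add: E_iff)

lemma tg_facts:
  "topspace (T0 \<Gamma>) = C0" "topspace (T1 \<Gamma>) = C1"
  "continuous_map (prod_topology (T0 \<Gamma>) (T0 \<Gamma>)) (T0 \<Gamma>) (\<lambda>p. fst p \<cdot> snd p)"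
  "continuous_map (prod_topology (T1 \<Gamma>) (T1 \<Gamma>)) (T1 \<Gamma>) (\<lambda>p. fst p \<diamondop> snd p)"
  "continuous_map (T0 \<Gamma>) (T0 \<Gamma>) i0" "continuous_map (T1 \<Gamma>) (T1 \<Gamma>) i1"
  "continuous_map (T1 \<Gamma>) (T0 \<Gamma>) s" "continuous_map (T1 \<Gamma>) (T0 \<Gamma>) t"
  "continuous_map (T0 \<Gamma>) (T1 \<Gamma>) \<iota>"
  using tg by (auto simp: topological_2group_def topological_group_def)

lemma cm0[continuous_intros]:
  "continuous_map Y (T0 \<Gamma>) f \<Longrightarrow> continuous_map Y (T0 \<Gamma>) g \<Longrightarrow> continuous_map Y (T0 \<Gamma>) (\<lambda>v. f v \<cdot> g v)"
  using continuous_map_compose[OF continuous_map_pairedI tg_facts(3), of Y f g] by (simp add: o_def)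
lemma cm1[continuous_intros]:
  "continuous_map Y (T1 \<Gamma>) f \<Longrightarrow> continuous_map Y (T1 \<Gamma>) g \<Longrightarrow> continuous_map Y (T1 \<Gamma>) (\<lambda>v. f v \<diamondop> g v)"
  using continuous_map_compose[OF continuous_map_pairedI tg_facts(4), of Y f g] by (simp add: o_def)
lemma ci0[continuous_intros]: "continuous_map Y (T0 \<Gamma>) f \<Longrightarrow> continuous_map Y (T0 \<Gamma>) (\<lambda>v. i0 (f v))"
  using continuous_map_compose[OF _ tg_facts(5), of Y f] by (simp add: o_def)
lemma ci1[continuous_intros]: "continuous_map Y (T1 \<Gamma>) f \<Longrightarrow> continuous_map Y (T1 \<Gamma>) (\<lambda>v. i1 (f v))"
  using continuous_map_compose[OF _ tg_facts(6), of Y f] by (simp add: o_def)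
lemma cs[continuous_intros]: "continuous_map Y (T1 \<Gamma>) f \<Longrightarrow> continuous_map Y (T0 \<Gamma>) (\<lambda>v. s (f v))"
  using continuous_map_compose[OF _ tg_facts(7), of Y f] by (simp add: o_def)
lemma ct[continuous_intros]: "continuous_map Y (T1 \<Gamma>) f \<Longrightarrow> continuous_map Y (T0 \<Gamma>) (\<lambda>v. t (f v))"
  using continuous_map_compose[OF _ tg_facts(8), of Y f] by (simp add: o_def)
lemma cid[continuous_intros]: "continuous_map Y (T0 \<Gamma>) f \<Longrightarrow> continuous_map Y (T1 \<Gamma>) (\<lambda>v. \<iota> (f v))"
  using continuous_map_compose[OF _ tg_facts(9), of Y f] by (simp add: o_def)

end

locale setting = tg \<Gamma> for \<Gamma> :: "('a, 'b) two_group" +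
  fixes X :: "'x topology" and I :: "'i set" and U :: "'i \<Rightarrow> 'x set"
  assumes cover: "open_cover X I U"
begin

lemma Usub: "i \<in> I \<Longrightarrow> U i \<subseteq> topspace X"
  using cover by (auto simp: open_cover_def dest: openin_subset)

lemma coc:
  assumes "cech_cocycle \<Gamma> X I U cz"
  shows "\<And>i j v. i \<in> I \<Longrightarrow> j \<in> I \<Longrightarrow> v \<in> U i \<Longrightarrow> v \<in> U j \<Longrightarrow> fst cz i j v \<in> C0"
    and "\<And>i j k v. i \<in> I \<Longrightarrow> j \<in> I \<Longrightarrow> k \<in> I \<Longrightarrow> v \<in> U i \<Longrightarrow> v \<in> U j \<Longrightarrow> v \<in> U k \<Longrightarrow> snd cz i j k v \<in> E"
    and "\<And>i j k v. i \<in> I \<Longrightarrow> j \<in> I \<Longrightarrow> k \<in> I \<Longrightarrow> v \<in> U i \<Longrightarrow> v \<in> U j \<Longrightarrow> v \<in> U k \<Longrightarrow>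
           t (snd cz i j k v) \<cdot> fst cz i j v \<cdot> fst cz j k v = fst cz i k v"
    and "\<And>i j k l v. i \<in> I \<Longrightarrow> j \<in> I \<Longrightarrow> k \<in> I \<Longrightarrow> l \<in> I \<Longrightarrow> v \<in> U i \<Longrightarrow> v \<in> U j \<Longrightarrow> v \<in> U k \<Longrightarrow> v \<in> U l \<Longrightarrow>
           snd cz i k l v \<diamondop> snd cz i j k v = snd cz i j l v \<diamondop> conjact \<Gamma> (fst cz i j v) (snd cz j k l v)"
proof -
  fix i j v assume h: "i \<in> I" "j \<in> I" "v \<in> U i" "v \<in> U j"
  then have "continuous_map (subtopology X (U i \<inter> U j)) (T0 \<Gamma>) (fst cz i j)"
    using assms by (auto simp: cech_cocycle_def)
  then show "fst cz i j v \<in> C0" using h Usub[of i]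
    by (auto simp: continuous_map_def tg_facts)
next
  fix i j k v assume h: "i \<in> I" "j \<in> I" "k \<in> I" "v \<in> U i" "v \<in> U j" "v \<in> U k"
  then have "continuous_map (subtopology X (U i \<inter> U j \<inter> U k)) (subtopology (T1 \<Gamma>) E) (snd cz i j k)"
    using assms by (auto simp: cech_cocycle_def)
  then show "snd cz i j k v \<in> E" using h Usub[of i]
    by (auto simp: continuous_map_def tg_facts)
  show "t (snd cz i j k v) \<cdot> fst cz i j v \<cdot> fst cz j k v = fst cz i k v"
    using assms h by (auto simp: cech_cocycle_def)
next
  fix i j k l v assume h: "i \<in> I" "j \<in> I" "k \<in> I" "l \<in> I" "v \<in> U i" "v \<in> U j" "v \<in> U k" "v \<in> U l"
  show "snd cz i k l v \<diamondop> snd cz i j k v = snd cz i j l v \<diamondop> conjact \<Gamma> (fst cz i j v) (snd cz j k l v)"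
    using assms h by (auto simp: cech_cocycle_def)
qed

lemma topspace_P0: "topspace (P0_top \<Gamma> X I U) = Sigma I (\<lambda>i. (topspace X \<inter> U i) \<times> C0)"
  by (auto simp: P0_top_def tg_facts)
lemma topspace_P1: "topspace (P1_top \<Gamma> X I U) = Sigma (I \<times> I) (\<lambda>(i,j). (topspace X \<inter> (U i \<inter> U j)) \<times> C1)"
  by (auto simp: P1_top_def tg_facts)

lemma cont_P0_map:
  assumes "\<And>i. i \<in> I \<Longrightarrow> continuous_map (subtopology X (U i)) (T0 \<Gamma>) (a i)"
  shows "continuous_map (P0_top \<Gamma> X I U) (P0_top \<Gamma> X I U)
           (\<lambda>p. (fst p, (fst (snd p), a (fst p) (fst (snd p)) \<cdot> snd (snd p))))"
  unfolding P0_top_def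
proof (rule continuous_map_sum_from)
  fix i assume i: "i \<in> I"
  let ?Y = "prod_topology (subtopology X (U i)) (T0 \<Gamma>)"
  have c1: "continuous_map ?Y ?Y (\<lambda>z. (fst z, a i (fst z) \<cdot> snd z))"
    using continuous_map_compose[OF continuous_map_fst assms[OF i]]
    by (intro continuous_intros) (auto simp: o_def)
  have c2: "continuous_map ?Y (sum_topology (\<lambda>i. prod_topology (subtopology X (U i)) (T0 \<Gamma>)) I) (\<lambda>x. (i, x))"
    using continuous_map_component_injection[OF i, of "\<lambda>i. prod_topology (subtopology X (U i)) (T0 \<Gamma>)"] by simp
  show "continuous_map ((\<lambda>i. prod_topology (subtopology X (U i)) (T0 \<Gamma>)) i)
          (sum_topology (\<lambda>i. prod_topology (subtopology X (U i)) (T0 \<Gamma>)) I)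
          (\<lambda>x. (fst (i, x), fst (snd (i, x)), a (fst (i, x)) (fst (snd (i, x))) \<cdot> snd (snd (i, x))))"
    using continuous_map_compose[OF c1 c2] by (simp add: o_def)
qed

lemma cont_P1_map:
  assumes "\<And>i j. i \<in> I \<Longrightarrow> j \<in> I \<Longrightarrow> continuous_map (subtopology X (U i \<inter> U j)) (T1 \<Gamma>) (b (i, j))"
  shows "continuous_map (P1_top \<Gamma> X I U) (P1_top \<Gamma> X I U)
           (\<lambda>p. (fst p, (fst (snd p), b (fst p) (fst (snd p)) \<diamondop> snd (snd p))))"
  unfolding P1_top_def
proof (rule continuous_map_sum_from)
  fix ij assume ij: "ij \<in> I \<times> I"
  obtain i j where ijeq: "ij = (i, j)" and i: "i \<in> I" and j: "j \<in> I" using ij by auto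
  let ?Y = "prod_topology (subtopology X (U i \<inter> U j)) (T1 \<Gamma>)"
  have c1: "continuous_map ?Y ?Y (\<lambda>z. (fst z, b (i, j) (fst z) \<diamondop> snd z))"
    using continuous_map_compose[OF continuous_map_fst assms[OF i j]]
    by (intro continuous_intros) (auto simp: o_def)
  have c2: "continuous_map ?Y (sum_topology (\<lambda>(i, j). prod_topology (subtopology X (U i \<inter> U j)) (T1 \<Gamma>)) (I \<times> I)) (\<lambda>x. ((i, j), x))"
    using continuous_map_component_injection[OF ij, of "\<lambda>(i, j). prod_topology (subtopology X (U i \<inter> U j)) (T1 \<Gamma>)"] ijeq by simp
  show "continuous_map ((\<lambda>(i, j). prod_topology (subtopology X (U i \<inter> U j)) (T1 \<Gamma>)) ij)
          (sum_topology (\<lambda>(i, j). prod_topology (subtopology X (U i \<inter> U j)) (T1 \<Gamma>)) (I \<times> I))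
          (\<lambda>x. (fst (ij, x), fst (snd (ij, x)), b (fst (ij, x)) (fst (snd (ij, x))) \<diamondop> snd (snd (ij, x))))"
    using continuous_map_compose[OF c1 c2] ijeq by (simp add: o_def)
qed

end

locale setting2 = setting \<Gamma> X I U for \<Gamma> :: "('a, 'b) two_group" and X :: "'x topology" and I :: "'i set" and U +
  fixes c c' :: "('i \<Rightarrow> 'i \<Rightarrow> 'x \<Rightarrow> 'a) \<times> ('i \<Rightarrow> 'i \<Rightarrow> 'i \<Rightarrow> 'x \<Rightarrow> 'b)"
  assumes cc: "cech_cocycle \<Gamma> X I U c" and cc': "cech_cocycle \<Gamma> X I U c'"
begin

lemmas cx = coc(1)[OF cc] and ce = coc(2)[OF cc] and ct1 = coc(3)[OF cc] and cpent = coc(4)[OF cc]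
lemmas dx = coc(1)[OF cc'] and de = coc(2)[OF cc'] and dt1 = coc(3)[OF cc'] and dpent = coc(4)[OF cc']


lemma fwd:
  assumes "cohomologous \<Gamma> X I U c c'"
  shows "\<exists>f0 f1. bundle_morphism \<Gamma> X I U c c' f0 f1"
proof -
  obtain a d where a_cont': "\<forall>i \<in> I. continuous_map (subtopology X (U i)) (T0 \<Gamma>) (a i)"
    and d_cont': "\<forall>i \<in> I. \<forall>j \<in> I. continuous_map (subtopology X (U i \<inter> U j)) (subtopology (T1 \<Gamma>) E) (d i j)"
    and hx': "\<forall>i \<in> I. \<forall>j \<in> I. \<forall>v \<in> U i \<inter> U j.
        fst c' i j v = a i v \<cdot> t (d i j v) \<cdot> fst c i j v \<cdot> i0 (a j v)"
    and he': "\<forall>i \<in> I. \<forall>j \<in> I. \<forall>k \<in> I. \<forall>v \<in> U i \<inter> U j \<inter> U k.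
        snd c' i j k v = conjact \<Gamma> (a i v) (d i k v \<diamondop> snd c i j k v
                \<diamondop> conjact \<Gamma> (fst c i j v) (i1 (d j k v)) \<diamondop> i1 (d i j v))"
    using assms unfolding cohomologous_def by blast
  have a_cont: "\<And>i. i \<in> I \<Longrightarrow> continuous_map (subtopology X (U i)) (T0 \<Gamma>) (a i)"
    using a_cont' by blast
  have d_cont: "\<And>i j. i \<in> I \<Longrightarrow> j \<in> I \<Longrightarrow> continuous_map (subtopology X (U i \<inter> U j)) (subtopology (T1 \<Gamma>) E) (d i j)"
    using d_cont' by blast
  have hx: "\<And>i j v. i \<in> I \<Longrightarrow> j \<in> I \<Longrightarrow> v \<in> U i \<inter> U j \<Longrightarrow>
        fst c' i j v = a i v \<cdot> t (d i j v) \<cdot> fst c i j v \<cdot> i0 (a j v)"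
    using hx' by blast
  have he: "\<And>i j k v. i \<in> I \<Longrightarrow> j \<in> I \<Longrightarrow> k \<in> I \<Longrightarrow> v \<in> U i \<inter> U j \<inter> U k \<Longrightarrow>
        snd c' i j k v = conjact \<Gamma> (a i v) (d i k v \<diamondop> snd c i j k v
                \<diamondop> conjact \<Gamma> (fst c i j v) (i1 (d j k v)) \<diamondop> i1 (d i j v))"
    using he' by blast
  have aC: "a i v \<in> C0" if "i \<in> I" "v \<in> U i" for i v
    using a_cont[OF that(1)] that Usub[OF that(1)] by (auto simp: continuous_map_def tg_facts)
  have dE: "d i j v \<in> E" if "i \<in> I" "j \<in> I" "v \<in> U i" "v \<in> U j" for i j v
    using d_cont[OF that(1,2)] that Usub[OF that(1)] by (auto simp: continuous_map_def tg_facts)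
  define f0 where "f0 = (\<lambda>p::'i \<times> 'x \<times> 'a. (fst p, (fst (snd p), a (fst p) (fst (snd p)) \<cdot> snd (snd p))))"
  define b where "b = (\<lambda>(i, j) v. \<iota> (a i v) \<diamondop> d i j v)"
  define f1 where "f1 = (\<lambda>p::('i \<times> 'i) \<times> 'x \<times> 'b. (fst p, (fst (snd p), b (fst p) (fst (snd p)) \<diamondop> snd (snd p))))"
  have b_cont: "continuous_map (subtopology X (U i \<inter> U j)) (T1 \<Gamma>) (b (i, j))" if "i \<in> I" "j \<in> I" for i j
  proof -
    have "continuous_map (subtopology X (U i \<inter> U j)) (T0 \<Gamma>) (a i)"
      using continuous_map_from_subtopology_mono[OF a_cont[OF that(1)]] by blast
    then show ?thesis
      using continuous_map_into_fulltopology[OF d_cont[OF that]]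
      by (auto simp: b_def intro!: continuous_intros)
  qed
  have "bundle_morphism \<Gamma> X I U c c' f0 f1"
    unfolding bundle_morphism_def
  proof (intro conjI ballI impI)
    show "continuous_map (P0_top \<Gamma> X I U) (P0_top \<Gamma> X I U) f0"
      unfolding f0_def by (rule cont_P0_map[OF a_cont])
    show "continuous_map (P1_top \<Gamma> X I U) (P1_top \<Gamma> X I U) f1"
      unfolding f1_def by (rule cont_P1_map[OF b_cont])
  next
    fix q assume "q \<in> topspace (P1_top \<Gamma> X I U)"
    then obtain i j v g where q: "q = ((i, j), (v, g))" "i \<in> I" "j \<in> I" "v \<in> U i" "v \<in> U j" "g \<in> C1"
      by (auto simp: topspace_P1)
    note [simp] = aC[OF q(2,4)] aC[OF q(3,5)] dE[OF q(2,3,4,5)] cx[OF q(2,3,4,5)]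
    show "P_src \<Gamma> c' (f1 q) = f0 (P_src \<Gamma> c q)"
      using q by (simp add: P_src_def f0_def f1_def b_def)
    show "P_tgt \<Gamma> c' (f1 q) = f0 (P_tgt \<Gamma> c q)"
      using q by (simp add: P_tgt_def f0_def f1_def b_def hx norm)
  next
    fix p q assume p: "p \<in> topspace (P1_top \<Gamma> X I U)" and q: "q \<in> topspace (P1_top \<Gamma> X I U)"
      and pq: "P_tgt \<Gamma> c p = P_src \<Gamma> c q"
    obtain i j v g where p': "p = ((i, j), (v, g))" "i \<in> I" "j \<in> I" "v \<in> U i" "v \<in> U j" "g \<in> C1"
      using p by (auto simp: topspace_P1)
    obtain j' k v' h where q': "q = ((j', k), (v', h))" "j' \<in> I" "k \<in> I" "v' \<in> U j'" "v' \<in> U k" "h \<in> C1"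
      using q by (auto simp: topspace_P1)
    have jj: "j' = j" "v' = v" and sh: "s h = i0 (fst c i j v) \<cdot> t g"
      using pq p' q' by (auto simp: P_tgt_def P_src_def)
    note q'' = q'[unfolded jj]
    note [simp] = aC[OF p'(2,4)] aC[OF p'(3,5)] aC[OF q''(3,5)] dE[OF p'(2,3,4,5)] dE[OF p'(3) q''(3) p'(5) q''(5)]
      dE[OF p'(2) q''(3) p'(4) q''(5)]
      cx[OF p'(2,3,4,5)] ce[OF p'(2,3) q''(3) p'(4,5) q''(5)] p'(6) q'(6)
    let ?x = "fst c i j v" and ?D = "d j k v"
    let ?m = "i1 (\<iota> ?x) \<diamondop> g \<diamondop> i1 (\<iota> (t g)) \<diamondop> \<iota> ?x"
    let ?P = "\<iota> (a i v) \<diamondop> d i k v \<diamondop> snd c i j k v \<diamondop> \<iota> ?x"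
    have mC: "?m \<in> C1" by simp
    have comm: "i1 ?D \<diamondop> ?m \<diamondop> ?D = ?m"
    proof -
      have "?m \<diamondop> ?D = ?D \<diamondop> ?m" by (rule peiffer) (simp_all add: norm)
      then show ?thesis by (simp add: norm)
    qed
    have c1: "cmp \<Gamma> g (\<iota> ?x \<diamondop> h) = g \<diamondop> i1 (\<iota> (t g)) \<diamondop> (\<iota> ?x \<diamondop> h)"
      by (rule cmp_formula) (simp_all add: sh norm)
    have c2: "cmp \<Gamma> (b (i, j) v \<diamondop> g) (\<iota> (fst c' i j v) \<diamondop> (b (j, k) v \<diamondop> h))
        = (b (i, j) v \<diamondop> g) \<diamondop> i1 (\<iota> (t (b (i, j) v \<diamondop> g))) \<diamondop> (\<iota> (fst c' i j v) \<diamondop> (b (j, k) v \<diamondop> h))"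
      using p'(2-5) q''(3,5)
      by (intro cmp_formula) (simp_all add: sh norm b_def hx)
    have L: "b (i, k) v \<diamondop> (snd c i j k v \<diamondop> cmp \<Gamma> g (\<iota> ?x \<diamondop> h)) = ?P \<diamondop> ?m \<diamondop> h"
      unfolding c1 by (simp add: b_def norm)
    have R: "snd c' i j k v \<diamondop> cmp \<Gamma> (b (i, j) v \<diamondop> g) (\<iota> (fst c' i j v) \<diamondop> (b (j, k) v \<diamondop> h))
       = ?P \<diamondop> (i1 ?D \<diamondop> ?m \<diamondop> ?D) \<diamondop> h"
      unfolding c2 using p'(2-5) q''(3,5)
      by (simp add: b_def norm he hx conjact_eq)
    show "f1 (P_cmp \<Gamma> c p q) = P_cmp \<Gamma> c' (f1 p) (f1 q)"
      using L R comm p' q'' by (simp add: P_cmp_def f1_def)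
  next
    fix p y assume "p \<in> topspace (P0_top \<Gamma> X I U)" "y \<in> C0"
    then show "f0 (P0_act \<Gamma> p y) = P0_act \<Gamma> (f0 p) y"
      by (auto simp: topspace_P0 f0_def P0_act_def A.m_assoc aC)
  next
    fix q h assume "q \<in> topspace (P1_top \<Gamma> X I U)" "h \<in> C1"
    then show "f1 (P1_act \<Gamma> q h) = P1_act \<Gamma> (f1 q) h"
      by (auto simp: topspace_P1 f1_def b_def P1_act_def B.m_assoc aC dE)
  qed (auto simp: f0_def f1_def P0_proj_def P1_proj_def)
  then show ?thesis by blast
qed

end

context tg begin

declare E_closed[simp del] E_mult[simp del] E_inv[simp del] E_conj[simp del]

lemma E_conj2: "x \<in> C1 \<Longrightarrow> f \<in> E \<Longrightarrow> x \<diamondop> f \<diamondop> i1 x \<in> E"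
  by (simp add: E_iff)

lemma key_E:
  assumes E: "Eijk \<in> E" "EijL \<in> E" "EiKL \<in> E" "EjkM \<in> E" "EjLM \<in> E" "EikM \<in> E" "EiKM \<in> E"
     "EKLM \<in> E" "EijM \<in> E" "EiLM \<in> E"
  and C0: "xij \<in> C0" "xiK \<in> C0" "xKL \<in> C0" "xjL \<in> C0" "xiL \<in> C0" "xkM \<in> C0"
  and C1: "Nij \<in> C1" "Njk \<in> C1" "Nik \<in> C1" "Y \<in> C1" "eps \<in> C1"
  and tN: "t Nij = xKL"
  and R: "EKLM \<diamondop> Nij \<diamondop> Njk = Nik \<diamondop> Y \<diamondop> eps \<diamondop> i1 Y"
  and t1: "t EiKL \<cdot> xiK \<cdot> xKL = xiL" and t2: "t EijL \<cdot> xij \<cdot> xjL = xiL"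
  and p1: "EikM \<diamondop> Eijk = EijM \<diamondop> conjact \<Gamma> xij EjkM"
  and p2: "EiLM \<diamondop> EijL = EijM \<diamondop> conjact \<Gamma> xij EjLM"
  and p3: "EiLM \<diamondop> EiKL = EiKM \<diamondop> conjact \<Gamma> xiK EKLM"
  shows "Eijk \<diamondop> (i1 EijL \<diamondop> EiKL \<diamondop> \<iota> xiK \<diamondop> Nij \<diamondop> i1 (\<iota> xjL)) \<diamondop> (i1 EjkM \<diamondop> EjLM \<diamondop> \<iota> xjL \<diamondop> Njk \<diamondop> i1 (\<iota> xkM))
       = (i1 EikM \<diamondop> EiKM \<diamondop> \<iota> xiK \<diamondop> Nik \<diamondop> i1 (\<iota> xkM)) \<diamondop> (\<iota> xkM \<diamondop> Y) \<diamondop> eps \<diamondop> i1 (\<iota> xkM \<diamondop> Y)"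
proof -
  note [simp] = E C0 C1
  note EC[simp] = E[THEN E_closed]
  define Pij where "Pij = i1 EijL \<diamondop> EiKL"
  define Pjk where "Pjk = i1 EjkM \<diamondop> EjLM"
  define Pik where "Pik = i1 EikM \<diamondop> EiKM"
  define Q where "Q = i1 (\<iota> xjL) \<diamondop> Pjk \<diamondop> \<iota> xjL"
  have PE[simp]: "Pij \<in> E" "Pjk \<in> E" "Pik \<in> E" unfolding Pij_def Pjk_def Pik_def
    by (intro E_mult E_inv E)+
  have PC[simp]: "Pij \<in> C1" "Pjk \<in> C1" "Pik \<in> C1" using PE by (auto intro: E_closed)
  have QE[simp]: "Q \<in> E" unfolding Q_def using E_s[OF PE(2)] by (simp add: E_iff)
  have QC[simp]: "Q \<in> C1" using QE by (rule E_closed)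
  have s2: "Nij \<diamondop> Q = \<iota> xKL \<diamondop> Q \<diamondop> i1 (\<iota> xKL) \<diamondop> Nij"
    using conj_t[of Nij Q] tN by simp
  let ?Z = "Nik \<diamondop> Y \<diamondop> eps \<diamondop> i1 Y \<diamondop> i1 (\<iota> xkM)"
  let ?coreL = "Eijk \<diamondop> Pij \<diamondop> \<iota> xiK \<diamondop> \<iota> xKL \<diamondop> Q \<diamondop> i1 (\<iota> xKL) \<diamondop> i1 EKLM"
  have L: "Eijk \<diamondop> (i1 EijL \<diamondop> EiKL \<diamondop> \<iota> xiK \<diamondop> Nij \<diamondop> i1 (\<iota> xjL)) \<diamondop> (i1 EjkM \<diamondop> EjLM \<diamondop> \<iota> xjL \<diamondop> Njk \<diamondop> i1 (\<iota> xkM))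
      = ?coreL \<diamondop> ?Z"
  proof -
    have "Eijk \<diamondop> (i1 EijL \<diamondop> EiKL \<diamondop> \<iota> xiK \<diamondop> Nij \<diamondop> i1 (\<iota> xjL)) \<diamondop> (i1 EjkM \<diamondop> EjLM \<diamondop> \<iota> xjL \<diamondop> Njk \<diamondop> i1 (\<iota> xkM))
      = Eijk \<diamondop> Pij \<diamondop> \<iota> xiK \<diamondop> (Nij \<diamondop> Q) \<diamondop> Njk \<diamondop> i1 (\<iota> xkM)"
      by (simp add: norm Pij_def Q_def Pjk_def)
    also have "\<dots> = Eijk \<diamondop> Pij \<diamondop> \<iota> xiK \<diamondop> (\<iota> xKL \<diamondop> Q \<diamondop> i1 (\<iota> xKL) \<diamondop> Nij) \<diamondop> Njk \<diamondop> i1 (\<iota> xkM)"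
      by (simp only: s2)
    also have "\<dots> = ?coreL \<diamondop> (EKLM \<diamondop> Nij \<diamondop> Njk) \<diamondop> i1 (\<iota> xkM)"
      by (simp add: norm)
    also have "\<dots> = ?coreL \<diamondop> (Nik \<diamondop> Y \<diamondop> eps \<diamondop> i1 Y) \<diamondop> i1 (\<iota> xkM)"
      by (simp only: R)
    also have "\<dots> = ?coreL \<diamondop> ?Z" by (simp add: norm)
    finally show ?thesis .
  qed
  have Rt: "(i1 EikM \<diamondop> EiKM \<diamondop> \<iota> xiK \<diamondop> Nik \<diamondop> i1 (\<iota> xkM)) \<diamondop> (\<iota> xkM \<diamondop> Y) \<diamondop> eps \<diamondop> i1 (\<iota> xkM \<diamondop> Y)
      = (Pik \<diamondop> \<iota> xiK) \<diamondop> ?Z"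
    by (simp add: norm Pik_def)
  define F where "F = \<iota> xij \<diamondop> Pjk \<diamondop> i1 (\<iota> xij)"
  define F1 where "F1 = \<iota> (t EijL) \<diamondop> F \<diamondop> i1 (\<iota> (t EijL))"
  define F2 where "F2 = i1 (\<iota> (t EiKL)) \<diamondop> F1 \<diamondop> \<iota> (t EiKL)"
  have FE0: "F \<in> E" unfolding F_def by (rule E_conj2) simp_all
  have FE1: "F1 \<in> E" unfolding F1_def using FE0 by (intro E_conj2) simp_all
  have FE2: "F2 \<in> E" unfolding F2_def using E_s[OF FE1] E_closed[OF FE1] by (simp add: E_iff)
  note FE[simp] = FE0 FE1 FE2
  have FC[simp]: "F \<in> C1" "F1 \<in> C1" "F2 \<in> C1" using FE by (auto intro: E_closed)
  have xKL_eq: "xKL = i0 xiK \<cdot> i0 (t EiKL) \<cdot> t EijL \<cdot> xij \<cdot> xjL"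
  proof -
    have "xKL = i0 xiK \<cdot> i0 (t EiKL) \<cdot> (t EiKL \<cdot> xiK \<cdot> xKL)" by (simp add: norm)
    also have "\<dots> = i0 xiK \<cdot> i0 (t EiKL) \<cdot> (t EijL \<cdot> xij \<cdot> xjL)" by (simp only: t1 t2)
    finally show ?thesis by (simp add: norm)
  qed
  have c1: "EiKL \<diamondop> F2 = F1 \<diamondop> EiKL"
  proof -
    have "EiKL \<diamondop> F2 = \<iota> (t EiKL) \<diamondop> F2 \<diamondop> i1 (\<iota> (t EiKL)) \<diamondop> EiKL" by (rule conj_t) simp_all
    then show ?thesis by (simp add: F2_def norm)
  qed
  have c2: "EijL \<diamondop> F = F1 \<diamondop> EijL"
  proof -
    have "EijL \<diamondop> F = \<iota> (t EijL) \<diamondop> F \<diamondop> i1 (\<iota> (t EijL)) \<diamondop> EijL" by (rule conj_t) simp_all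
    then show ?thesis by (simp add: F1_def norm)
  qed
  have c2': "i1 EijL \<diamondop> F1 = F \<diamondop> i1 EijL"
  proof -
    have "i1 EijL \<diamondop> F1 = i1 EijL \<diamondop> (F1 \<diamondop> EijL) \<diamondop> i1 EijL" by (simp add: norm)
    also have "\<dots> = i1 EijL \<diamondop> (EijL \<diamondop> F) \<diamondop> i1 EijL" by (simp only: c2)
    finally show ?thesis by (simp add: norm)
  qed
  have pc: "Pij \<diamondop> F2 = F \<diamondop> Pij"
  proof -
    have "Pij \<diamondop> F2 = i1 EijL \<diamondop> (EiKL \<diamondop> F2)" by (simp add: Pij_def norm)
    also have "\<dots> = i1 EijL \<diamondop> (F1 \<diamondop> EiKL)" by (simp only: c1)
    also have "\<dots> = (i1 EijL \<diamondop> F1) \<diamondop> EiKL" by (simp add: norm)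
    also have "\<dots> = (F \<diamondop> i1 EijL) \<diamondop> EiKL" by (simp only: c2')
    finally show ?thesis by (simp add: Pij_def norm)
  qed
  have s1: "Eijk = i1 EikM \<diamondop> EijM \<diamondop> \<iota> xij \<diamondop> EjkM \<diamondop> i1 (\<iota> xij)"
  proof -
    have "Eijk = i1 EikM \<diamondop> (EikM \<diamondop> Eijk)" by (simp add: norm)
    also have "\<dots> = i1 EikM \<diamondop> (EijM \<diamondop> conjact \<Gamma> xij EjkM)" by (simp only: p1)
    finally show ?thesis by (simp add: norm conjact_eq)
  qed
  have s2': "EijL = i1 EiLM \<diamondop> EijM \<diamondop> \<iota> xij \<diamondop> EjLM \<diamondop> i1 (\<iota> xij)"
  proof -
    have "EijL = i1 EiLM \<diamondop> (EiLM \<diamondop> EijL)" by (simp add: norm)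
    also have "\<dots> = i1 EiLM \<diamondop> (EijM \<diamondop> conjact \<Gamma> xij EjLM)" by (simp only: p2)
    finally show ?thesis by (simp add: norm conjact_eq)
  qed
  have s3: "EiKL = i1 EiLM \<diamondop> EiKM \<diamondop> \<iota> xiK \<diamondop> EKLM \<diamondop> i1 (\<iota> xiK)"
  proof -
    have "EiKL = i1 EiLM \<diamondop> (EiLM \<diamondop> EiKL)" by (simp add: norm)
    also have "\<dots> = i1 EiLM \<diamondop> (EiKM \<diamondop> conjact \<Gamma> xiK EKLM)" by (simp only: p3)
    finally show ?thesis by (simp add: norm conjact_eq)
  qed
  have pent: "Eijk \<diamondop> F \<diamondop> Pij = Pik \<diamondop> \<iota> xiK \<diamondop> EKLM \<diamondop> i1 (\<iota> xiK)"
  proof -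
    have "Eijk \<diamondop> F \<diamondop> Pij = Eijk \<diamondop> \<iota> xij \<diamondop> i1 EjkM \<diamondop> EjLM \<diamondop> i1 (\<iota> xij) \<diamondop> i1 EijL \<diamondop> EiKL"
      by (simp add: F_def Pjk_def Pij_def norm)
    also have "\<dots> = Pik \<diamondop> \<iota> xiK \<diamondop> EKLM \<diamondop> i1 (\<iota> xiK)"
      unfolding Pik_def
      apply (subst s1, subst s2', subst s3)
      by (simp add: norm)
    finally show ?thesis .
  qed
  have core: "?coreL = Pik \<diamondop> \<iota> xiK"
  proof -
    have "?coreL = Eijk \<diamondop> (Pij \<diamondop> F2) \<diamondop> \<iota> xiK \<diamondop> i1 EKLM"
      unfolding xKL_eq by (simp add: norm Q_def F2_def F1_def F_def)
    also have "\<dots> = (Eijk \<diamondop> F \<diamondop> Pij) \<diamondop> \<iota> xiK \<diamondop> i1 EKLM" by (simp add: pc norm)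
    also have "\<dots> = (Pik \<diamondop> \<iota> xiK \<diamondop> EKLM \<diamondop> i1 (\<iota> xiK)) \<diamondop> \<iota> xiK \<diamondop> i1 EKLM" by (simp only: pent)
    finally show ?thesis by (simp add: norm)
  qed
  show ?thesis using L Rt core by simp
qed

end

lemma cont_local_sub:
  assumes "\<And>v. v \<in> topspace X \<inter> S \<Longrightarrow> \<exists>T g. openin (subtopology X S) T \<and> v \<in> T \<and>
             continuous_map (subtopology X T) Y g \<and> (\<forall>w\<in>T. f w = g w)"
  shows "continuous_map (subtopology X S) Y f"
proof (rule continuous_map_local)
  fix v assume "v \<in> topspace (subtopology X S)"
  then have "v \<in> topspace X \<inter> S" by simp
  from assms[OF this] obtain T g where T: "openin (subtopology X S) T" "v \<in> T" "continuous_map (subtopology X T) Y g"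
    "\<forall>w\<in>T. f w = g w" by blast
  have TS: "T \<subseteq> topspace X \<inter> S" using openin_subset[OF T(1)] by simp
  have eq: "subtopology (subtopology X S) T = subtopology X T"
    using TS by (simp add: subtopology_subtopology Int_absorb1 inf.absorb2)
  have "continuous_map (subtopology X T) Y f"
    using T(3) by (rule continuous_map_eq) (use T(4) in auto)
  then show "\<exists>T. openin (subtopology X S) T \<and> v \<in> T \<and> continuous_map (subtopology (subtopology X S) T) Y f"
    using T(1,2) eq by auto
qed

locale bwd_setting = setting2 \<Gamma> X I U c c' for \<Gamma> :: "('a, 'b) two_group" and X :: "'x topology"
  and I :: "'i set" and U and c c' +
  fixes f0 f1
  assumes bm: "bundle_morphism \<Gamma> X I U c c' f0 f1"
begin

declare E_closed[simp del] E_mult[simp del] E_inv[simp del] E_conj[simp del]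

lemma cmp_ee[simp]: "cmp \<Gamma> e1 e1 = e1" using cmp_id(1)[of e1] by simp

lemma f0c: "continuous_map (P0_top \<Gamma> X I U) (P0_top \<Gamma> X I U) f0"
  and f1c: "continuous_map (P1_top \<Gamma> X I U) (P1_top \<Gamma> X I U) f1"
  and st: "\<And>q. q \<in> topspace (P1_top \<Gamma> X I U) \<Longrightarrow>
        P_src \<Gamma> c' (f1 q) = f0 (P_src \<Gamma> c q) \<and> P_tgt \<Gamma> c' (f1 q) = f0 (P_tgt \<Gamma> c q)"
  and cm: "\<And>p q. p \<in> topspace (P1_top \<Gamma> X I U) \<Longrightarrow> q \<in> topspace (P1_top \<Gamma> X I U) \<Longrightarrow>
        P_tgt \<Gamma> c p = P_src \<Gamma> c q \<Longrightarrow> f1 (P_cmp \<Gamma> c p q) = P_cmp \<Gamma> c' (f1 p) (f1 q)"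
  and act0: "\<And>p y. p \<in> topspace (P0_top \<Gamma> X I U) \<Longrightarrow> y \<in> C0 \<Longrightarrow> f0 (P0_act \<Gamma> p y) = P0_act \<Gamma> (f0 p) y"
  and act1: "\<And>q h. q \<in> topspace (P1_top \<Gamma> X I U) \<Longrightarrow> h \<in> C1 \<Longrightarrow> f1 (P1_act \<Gamma> q h) = P1_act \<Gamma> (f1 q) h"
  and pr0: "\<And>p. p \<in> topspace (P0_top \<Gamma> X I U) \<Longrightarrow> P0_proj (f0 p) = P0_proj p"
  and pr1: "\<And>q. q \<in> topspace (P1_top \<Gamma> X I U) \<Longrightarrow> P1_proj (f1 q) = P1_proj q"
  using bm unfolding bundle_morphism_def by blast+

definition K where "K i v = fst (f0 (i, (v, e0)))"
definition y where "y i v = snd (snd (f0 (i, (v, e0))))"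
definition h where "h i j v = snd (snd (f1 ((i, j), (v, e1))))"

lemma pt0: "i \<in> I \<Longrightarrow> v \<in> U i \<Longrightarrow> g \<in> C0 \<Longrightarrow> (i, (v, g)) \<in> topspace (P0_top \<Gamma> X I U)"
  using Usub by (auto simp: topspace_P0)
lemma pt1: "i \<in> I \<Longrightarrow> j \<in> I \<Longrightarrow> v \<in> U i \<Longrightarrow> v \<in> U j \<Longrightarrow> g \<in> C1 \<Longrightarrow> ((i, j), (v, g)) \<in> topspace (P1_top \<Gamma> X I U)"
  using Usub by (auto simp: topspace_P1)

lemma f0_pt:
  assumes "i \<in> I" "v \<in> U i"
  shows "f0 (i, (v, e0)) = (K i v, (v, y i v))" "K i v \<in> I" "v \<in> U (K i v)" "y i v \<in> C0"
proof -
  have p: "(i, (v, e0)) \<in> topspace (P0_top \<Gamma> X I U)" using pt0 assms by simp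
  have inP: "f0 (i, (v, e0)) \<in> topspace (P0_top \<Gamma> X I U)"
    using continuous_map_image_subset_topspace[OF f0c] p by blast
  have pr: "P0_proj (f0 (i, (v, e0))) = v" using pr0[OF p] by (simp add: P0_proj_def)
  show "f0 (i, (v, e0)) = (K i v, (v, y i v))" "K i v \<in> I" "v \<in> U (K i v)" "y i v \<in> C0"
    using inP pr by (cases "f0 (i, (v, e0))"; auto simp: K_def y_def topspace_P0 P0_proj_def)+
qed

lemma f0_gen:
  assumes "i \<in> I" "v \<in> U i" "g \<in> C0"
  shows "f0 (i, (v, g)) = (K i v, (v, y i v \<cdot> g))"
proof -
  have "f0 (P0_act \<Gamma> (i, (v, e0)) g) = P0_act \<Gamma> (f0 (i, (v, e0))) g"
    using act0 pt0 assms by simp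
  then show ?thesis using f0_pt[OF assms(1,2)] assms(3) by (simp add: P0_act_def)
qed

lemma f1_A:
  assumes ij: "i \<in> I" "j \<in> I" "v \<in> U i" "v \<in> U j"
  shows "f1 ((i, j), (v, e1)) = ((K i v, K j v), (v, h i j v))" "h i j v \<in> C1" "s (h i j v) = y i v"
    "t (h i j v) = fst c' (K i v) (K j v) v \<cdot> y j v \<cdot> i0 (fst c i j v)"
proof -
  have q: "((i, j), (v, e1)) \<in> topspace (P1_top \<Gamma> X I U)" using pt1 ij by simp
  have inP: "f1 ((i, j), (v, e1)) \<in> topspace (P1_top \<Gamma> X I U)"
    using continuous_map_image_subset_topspace[OF f1c] q by blast
  obtain k l w g where fq: "f1 ((i, j), (v, e1)) = ((k, l), (w, g))" "k \<in> I" "l \<in> I" "w \<in> U k" "w \<in> U l" "g \<in> C1"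
    using inP by (cases "f1 ((i, j), (v, e1))") (auto simp: topspace_P1)
  have wv: "w = v" using pr1[OF q] fq(1) by (simp add: P1_proj_def)
  have src: "(k, (v, s g)) = (K i v, (v, y i v))"
    using conjunct1[OF st[OF q]] fq(1) wv f0_pt(1)[OF ij(1,3)] by (simp add: P_src_def)
  have xC: "fst c i j v \<in> C0" using cx ij by simp
  have tgt: "(l, (v, i0 (fst c' k l v) \<cdot> t g)) = (K j v, (v, y j v \<cdot> i0 (fst c i j v)))"
    using conjunct2[OF st[OF q]] fq(1) wv f0_gen[OF ij(2,4) A.inv_closed[OF xC]] xC by (auto simp: P_tgt_def)
  have kl: "k = K i v" "l = K j v" using src tgt by auto
  have x'C: "fst c' k l v \<in> C0" using dx fq wv by simp
  have "t g = fst c' k l v \<cdot> (i0 (fst c' k l v) \<cdot> t g)" using x'C fq(6) by simp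
  also have "\<dots> = fst c' k l v \<cdot> (y j v \<cdot> i0 (fst c i j v))"
    using tgt by auto
  finally have tg: "t g = fst c' k l v \<cdot> y j v \<cdot> i0 (fst c i j v)"
    using x'C xC f0_pt(4)[OF ij(2,4)] by (simp add: norm)
  have hg: "h i j v = g" using fq(1) by (simp add: h_def)
  show "f1 ((i, j), (v, e1)) = ((K i v, K j v), (v, h i j v))" using fq(1) wv kl hg by simp
  show "h i j v \<in> C1" using hg fq by simp
  show "s (h i j v) = y i v" using hg src by simp
  show "t (h i j v) = fst c' (K i v) (K j v) v \<cdot> y j v \<cdot> i0 (fst c i j v)" using hg tg kl by simp
qed

lemma f1_gen:
  assumes ij: "i \<in> I" "j \<in> I" "v \<in> U i" "v \<in> U j" and g: "g \<in> C1"
  shows "f1 ((i, j), (v, g)) = ((K i v, K j v), (v, h i j v \<diamondop> g))"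
proof -
  have "f1 (P1_act \<Gamma> ((i, j), (v, e1)) g) = P1_act \<Gamma> (f1 ((i, j), (v, e1))) g"
    using act1 pt1 ij g by simp
  then show ?thesis using f1_A(1)[OF ij] g by (simp add: P1_act_def)
qed

lemma R:
  assumes ijk: "i \<in> I" "j \<in> I" "k \<in> I" "v \<in> U i" "v \<in> U j" "v \<in> U k"
  shows "snd c' (K i v) (K j v) (K k v) v \<diamondop> h i j v \<diamondop> \<iota> (fst c i j v) \<diamondop> i1 (\<iota> (y j v))
           \<diamondop> h j k v \<diamondop> i1 (\<iota> (fst c i j v)) = h i k v \<diamondop> snd c i j k v"
proof -
  let ?x = "fst c i j v"
  have xC[simp]: "?x \<in> C0" using cx ijk by simp
  have eE: "snd c i j k v \<in> E" using ce ijk by simp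
  have eC[simp]: "snd c i j k v \<in> C1" using E_closed[OF eE] .
  note hfacts = f1_A[OF ijk(1,2,4,5)] f1_A[OF ijk(2,3,5,6)] f1_A[OF ijk(1,3,4,6)]
  note [simp] = hfacts(2,3,6,7,10,11) f0_pt(2-4)[OF ijk(1,4)] f0_pt(2-4)[OF ijk(2,5)] f0_pt(2-4)[OF ijk(3,6)]
  define p where "p = ((i, j), (v, e1))"
  define q where "q = ((j, k), (v, \<iota> (i0 ?x)))"
  have pq: "p \<in> topspace (P1_top \<Gamma> X I U)" "q \<in> topspace (P1_top \<Gamma> X I U)"
    unfolding p_def q_def using pt1 ijk by simp_all
  have "P_tgt \<Gamma> c p = P_src \<Gamma> c q" by (simp add: P_tgt_def P_src_def p_def q_def)
  then have eq: "f1 (P_cmp \<Gamma> c p q) = P_cmp \<Gamma> c' (f1 p) (f1 q)" using cm pq by blast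
  have "P_cmp \<Gamma> c p q = ((i, k), (v, snd c i j k v))" by (simp add: P_cmp_def p_def q_def)
  then have L: "f1 (P_cmp \<Gamma> c p q) = ((K i v, K k v), (v, h i k v \<diamondop> snd c i j k v))"
    using f1_gen[OF ijk(1,3,4,6) eC] by simp
  have fp: "f1 p = ((K i v, K j v), (v, h i j v))" using hfacts(1) by (simp add: p_def)
  have fq: "f1 q = ((K j v, K k v), (v, h j k v \<diamondop> \<iota> (i0 ?x)))" unfolding q_def
    by (rule f1_gen) (use ijk in simp_all)
  have x'C[simp]: "fst c' (K i v) (K j v) v \<in> C0" using dx ijk by simp
  have yjC[simp]: "y j v \<in> C0" by simp
  have cf: "cmp \<Gamma> (h i j v) (\<iota> (fst c' (K i v) (K j v) v) \<diamondop> (h j k v \<diamondop> \<iota> (i0 ?x)))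
     = h i j v \<diamondop> i1 (\<iota> (t (h i j v))) \<diamondop> (\<iota> (fst c' (K i v) (K j v) v) \<diamondop> (h j k v \<diamondop> \<iota> (i0 ?x)))"
    by (rule cmp_formula) (simp_all add: hfacts norm)
  have "h i k v \<diamondop> snd c i j k v = snd c' (K i v) (K j v) (K k v) v \<diamondop>
      cmp \<Gamma> (h i j v) (\<iota> (fst c' (K i v) (K j v) v) \<diamondop> (h j k v \<diamondop> \<iota> (i0 ?x)))"
    using eq L fp fq by (simp add: P_cmp_def)
  also have "\<dots> = snd c' (K i v) (K j v) (K k v) v \<diamondop> h i j v \<diamondop> \<iota> (fst c i j v) \<diamondop> i1 (\<iota> (y j v))
           \<diamondop> h j k v \<diamondop> i1 (\<iota> (fst c i j v))"
    unfolding cf using de[of "K i v" "K j v" "K k v" v] by (simp add: hfacts norm E_closed)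
  finally show ?thesis by simp
qed


definition a where "a i v = fst c' i (K i v) v \<cdot> y i v"
definition N where "N i j v = h i j v \<diamondop> \<iota> (fst c i j v) \<diamondop> i1 (\<iota> (y j v))"
definition M where "M i j v = i1 (snd c' i j (K j v) v) \<diamondop> snd c' i (K i v) (K j v) v
   \<diamondop> \<iota> (fst c' i (K i v) v) \<diamondop> N i j v \<diamondop> i1 (\<iota> (fst c' j (K j v) v))"
definition d where "d i j v = i1 (\<iota> (a i v)) \<diamondop> M i j v \<diamondop> \<iota> (a j v) \<diamondop> i1 (\<iota> (fst c i j v))"

lemma aC: "i \<in> I \<Longrightarrow> v \<in> U i \<Longrightarrow> a i v \<in> C0"
  using f0_pt[of i v] dx[of i "K i v" v] by (simp add: a_def)

lemma NC: assumes "i \<in> I" "j \<in> I" "v \<in> U i" "v \<in> U j"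
  shows "N i j v \<in> C1" "t (N i j v) = fst c' (K i v) (K j v) v" "s (N i j v) = y i v \<cdot> fst c i j v \<cdot> i0 (y j v)"
proof -
  note [simp] = f1_A[OF assms] f0_pt(2-4)[OF assms(1,3)] f0_pt(2-4)[OF assms(2,4)] cx[OF assms] dx[of "K i v" "K j v" v]
  show "N i j v \<in> C1" "t (N i j v) = fst c' (K i v) (K j v) v" "s (N i j v) = y i v \<cdot> fst c i j v \<cdot> i0 (y j v)"
    by (simp_all add: N_def norm)
qed

lemma ME: assumes "i \<in> I" "j \<in> I" "v \<in> U i" "v \<in> U j"
  shows "M i j v \<in> C1" "t (M i j v) = fst c' i j v" "s (M i j v) = a i v \<cdot> fst c i j v \<cdot> i0 (a j v)"
proof -
  note kk = f0_pt(2-4)[OF assms(1,3)] f0_pt(2-4)[OF assms(2,4)]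
  note [simp] = assms NC[OF assms] kk cx[OF assms] dx[OF assms] dx[of i "K i v" v] dx[of j "K j v" v] dx[of "K i v" "K j v" v]
     dx[of i "K j v" v]
  have e1: "snd c' i j (K j v) v \<in> E" using de[of i j "K j v" v] assms kk by simp
  have e2: "snd c' i (K i v) (K j v) v \<in> E" using de[of i "K i v" "K j v" v] assms kk by simp
  note [simp] = e1 e2 E_closed[OF e1] E_closed[OF e2] E_s[OF e1] E_s[OF e2]
  show "M i j v \<in> C1" by (simp add: M_def)
  show "s (M i j v) = a i v \<cdot> fst c i j v \<cdot> i0 (a j v)" by (simp add: M_def a_def norm)
  have t1: "t (snd c' i (K i v) (K j v) v) \<cdot> fst c' i (K i v) v \<cdot> fst c' (K i v) (K j v) v = fst c' i (K j v) v"
    using dt1[of i "K i v" "K j v" v] assms kk by simp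
  have t2: "t (snd c' i j (K j v) v) \<cdot> fst c' i j v \<cdot> fst c' j (K j v) v = fst c' i (K j v) v"
    using dt1[of i j "K j v" v] assms kk by simp
  have "t (M i j v) = i0 (t (snd c' i j (K j v) v)) \<cdot> (t (snd c' i (K i v) (K j v) v) \<cdot> fst c' i (K i v) v \<cdot> fst c' (K i v) (K j v) v)
       \<cdot> i0 (fst c' j (K j v) v)"
    by (simp add: M_def norm)
  also have "\<dots> = i0 (t (snd c' i j (K j v) v)) \<cdot> (t (snd c' i j (K j v) v) \<cdot> fst c' i j v \<cdot> fst c' j (K j v) v)
       \<cdot> i0 (fst c' j (K j v) v)"
    by (simp only: t1 t2)
  finally show "t (M i j v) = fst c' i j v" by (simp add: norm)
qed

lemma dE: assumes "i \<in> I" "j \<in> I" "v \<in> U i" "v \<in> U j"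
  shows "d i j v \<in> E"
proof -
  note [simp] = ME[OF assms] aC[OF assms(1,3)] aC[OF assms(2,4)] cx[OF assms]
  show ?thesis by (simp add: d_def E_iff norm)
qed

lemma hx: assumes "i \<in> I" "j \<in> I" "v \<in> U i" "v \<in> U j"
  shows "fst c' i j v = a i v \<cdot> t (d i j v) \<cdot> fst c i j v \<cdot> i0 (a j v)"
proof -
  note [simp] = ME[OF assms] aC[OF assms(1,3)] aC[OF assms(2,4)] cx[OF assms] dx[OF assms]
  show ?thesis by (simp add: d_def norm)
qed

lemma Rn:
  assumes ijk: "i \<in> I" "j \<in> I" "k \<in> I" "v \<in> U i" "v \<in> U j" "v \<in> U k"
  shows "snd c' (K i v) (K j v) (K k v) v \<diamondop> N i j v \<diamondop> N j k v
    = N i k v \<diamondop> \<iota> (y k v) \<diamondop> (i1 (\<iota> (fst c i k v)) \<diamondop> snd c i j k v \<diamondop> \<iota> (fst c i j v) \<diamondop> \<iota> (fst c j k v)) \<diamondop> i1 (\<iota> (y k v))"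
proof -
  note kk = f0_pt(2-4)[OF ijk(1,4)] f0_pt(2-4)[OF ijk(2,5)] f0_pt(2-4)[OF ijk(3,6)]
  have eE: "snd c i j k v \<in> E" using ce ijk by simp
  have e'E: "snd c' (K i v) (K j v) (K k v) v \<in> E" using de kk by simp
  note [simp] = kk f1_A(2)[OF ijk(1,2,4,5)] f1_A(2)[OF ijk(2,3,5,6)] f1_A(2)[OF ijk(1,3,4,6)]
    cx[OF ijk(1,2,4,5)] cx[OF ijk(2,3,5,6)] cx[OF ijk(1,3,4,6)] E_closed[OF eE] E_closed[OF e'E]
  have "snd c' (K i v) (K j v) (K k v) v \<diamondop> N i j v \<diamondop> N j k v
    = (snd c' (K i v) (K j v) (K k v) v \<diamondop> h i j v \<diamondop> \<iota> (fst c i j v) \<diamondop> i1 (\<iota> (y j v))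
           \<diamondop> h j k v \<diamondop> i1 (\<iota> (fst c i j v))) \<diamondop> \<iota> (fst c i j v) \<diamondop> \<iota> (fst c j k v) \<diamondop> i1 (\<iota> (y k v))"
    by (simp add: N_def norm)
  also have "\<dots> = (h i k v \<diamondop> snd c i j k v) \<diamondop> \<iota> (fst c i j v) \<diamondop> \<iota> (fst c j k v) \<diamondop> i1 (\<iota> (y k v))"
    by (simp only: R[OF ijk])
  finally show ?thesis by (simp add: N_def norm)
qed

lemma he:
  assumes ijk: "i \<in> I" "j \<in> I" "k \<in> I" "v \<in> U i" "v \<in> U j" "v \<in> U k"
  shows "snd c' i j k v = conjact \<Gamma> (a i v) (d i k v \<diamondop> snd c i j k v
                \<diamondop> conjact \<Gamma> (fst c i j v) (i1 (d j k v)) \<diamondop> i1 (d i j v))"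
proof -
  note kk = f0_pt(2-4)[OF ijk(1,4)] f0_pt(2-4)[OF ijk(2,5)] f0_pt(2-4)[OF ijk(3,6)]
  let ?K = "K i v" and ?L = "K j v" and ?M = "K k v"
  have eE: "snd c i j k v \<in> E" using ce ijk by simp
  let ?eps = "i1 (\<iota> (fst c i k v)) \<diamondop> snd c i j k v \<diamondop> \<iota> (fst c i j v) \<diamondop> \<iota> (fst c j k v)"
  have ia: "\<iota> (a k v) = \<iota> (fst c' k ?M v) \<diamondop> \<iota> (y k v)"
    using kk dx[of k ?M v] ijk by (simp add: a_def)
  have keyM: "snd c' i j k v \<diamondop> M i j v \<diamondop> M j k v = M i k v \<diamondop> \<iota> (a k v) \<diamondop> ?eps \<diamondop> i1 (\<iota> (a k v))"
    unfolding M_def ia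
  proof (rule key_E[where EKLM = "snd c' ?K ?L ?M v" and EijM = "snd c' i j ?M v" and EiLM = "snd c' i ?L ?M v"
        and xij = "fst c' i j v" and xKL = "fst c' ?K ?L v" and xiL = "fst c' i ?L v"])
    show "snd c' i j k v \<in> E" "snd c' i j ?L v \<in> E" "snd c' i ?K ?L v \<in> E" "snd c' j k ?M v \<in> E"
      "snd c' j ?L ?M v \<in> E" "snd c' i k ?M v \<in> E" "snd c' i ?K ?M v \<in> E" "snd c' ?K ?L ?M v \<in> E"
      "snd c' i j ?M v \<in> E" "snd c' i ?L ?M v \<in> E"
      using de kk ijk by simp_all
    show "fst c' i j v \<in> C0" "fst c' i ?K v \<in> C0" "fst c' ?K ?L v \<in> C0" "fst c' j ?L v \<in> C0"
      "fst c' i ?L v \<in> C0" "fst c' k ?M v \<in> C0"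
      using dx kk ijk by simp_all
    show "N i j v \<in> C1" "N j k v \<in> C1" "N i k v \<in> C1" "\<iota> (y k v) \<in> C1"
      using NC ijk kk by simp_all
    show "?eps \<in> C1" using cx ijk E_closed[OF eE] by simp
    show "t (N i j v) = fst c' ?K ?L v" using NC ijk by simp
    show "snd c' ?K ?L ?M v \<diamondop> N i j v \<diamondop> N j k v = N i k v \<diamondop> \<iota> (y k v) \<diamondop> ?eps \<diamondop> i1 (\<iota> (y k v))"
      by (rule Rn[OF ijk])
    show "t (snd c' i ?K ?L v) \<cdot> fst c' i ?K v \<cdot> fst c' ?K ?L v = fst c' i ?L v"
      using dt1 kk ijk by simp
    show "t (snd c' i j ?L v) \<cdot> fst c' i j v \<cdot> fst c' j ?L v = fst c' i ?L v"
      using dt1 kk ijk by simp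
    show "snd c' i k ?M v \<diamondop> snd c' i j k v = snd c' i j ?M v \<diamondop> conjact \<Gamma> (fst c' i j v) (snd c' j k ?M v)"
      using dpent kk ijk by simp
    show "snd c' i ?L ?M v \<diamondop> snd c' i j ?L v = snd c' i j ?M v \<diamondop> conjact \<Gamma> (fst c' i j v) (snd c' j ?L ?M v)"
      using dpent kk ijk by simp
    show "snd c' i ?L ?M v \<diamondop> snd c' i ?K ?L v = snd c' i ?K ?M v \<diamondop> conjact \<Gamma> (fst c' i ?K v) (snd c' ?K ?L ?M v)"
      using dpent kk ijk by simp
  qed
  note [simp] = ME(1)[OF ijk(1,2,4,5)] ME(1)[OF ijk(2,3,5,6)] ME(1)[OF ijk(1,3,4,6)]
    aC[OF ijk(1,4)] aC[OF ijk(2,5)] aC[OF ijk(3,6)] cx[OF ijk(1,2,4,5)] cx[OF ijk(2,3,5,6)] cx[OF ijk(1,3,4,6)]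
    E_closed[OF eE]
  have e'C[simp]: "snd c' i j k v \<in> C1" using de ijk E_closed by simp
  have "snd c' i j k v = (snd c' i j k v \<diamondop> M i j v \<diamondop> M j k v) \<diamondop> i1 (M j k v) \<diamondop> i1 (M i j v)"
    by (simp add: norm)
  also have "\<dots> = (M i k v \<diamondop> \<iota> (a k v) \<diamondop> ?eps \<diamondop> i1 (\<iota> (a k v))) \<diamondop> i1 (M j k v) \<diamondop> i1 (M i j v)"
    by (simp only: keyM)
  also have "\<dots> = conjact \<Gamma> (a i v) (d i k v \<diamondop> snd c i j k v
                \<diamondop> conjact \<Gamma> (fst c i j v) (i1 (d j k v)) \<diamondop> i1 (d i j v))"
    by (simp add: d_def conjact_eq norm)
  finally show ?thesis .
qed


lemma dx_cont: "i \<in> I \<Longrightarrow> j \<in> I \<Longrightarrow> continuous_map (subtopology X (U i \<inter> U j)) (T0 \<Gamma>) (fst c' i j)"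
  using cc' by (simp add: cech_cocycle_def)
lemma cx_cont: "i \<in> I \<Longrightarrow> j \<in> I \<Longrightarrow> continuous_map (subtopology X (U i \<inter> U j)) (T0 \<Gamma>) (fst c i j)"
  using cc by (simp add: cech_cocycle_def)
lemma de_cont: "i \<in> I \<Longrightarrow> j \<in> I \<Longrightarrow> k \<in> I \<Longrightarrow>
    continuous_map (subtopology X (U i \<inter> U j \<inter> U k)) (T1 \<Gamma>) (snd c' i j k)"
proof -
  assume "i \<in> I" "j \<in> I" "k \<in> I"
  then have "continuous_map (subtopology X (U i \<inter> U j \<inter> U k)) (subtopology (T1 \<Gamma>) E) (snd c' i j k)"
    using cc' by (simp add: cech_cocycle_def)
  then show ?thesis by (rule continuous_map_into_fulltopology)
qed

lemma phi0: "i \<in> I \<Longrightarrow> continuous_map (subtopology X (U i)) (P0_top \<Gamma> X I U) (\<lambda>w. f0 (i, (w, e0)))"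
proof -
  assume i: "i \<in> I"
  have c1: "continuous_map (subtopology X (U i)) (prod_topology (subtopology X (U i)) (T0 \<Gamma>)) (\<lambda>w. (w, e0))"
    by (intro continuous_map_pairedI) (auto simp: tg_facts)
  have c2: "continuous_map (prod_topology (subtopology X (U i)) (T0 \<Gamma>)) (P0_top \<Gamma> X I U) (\<lambda>x. (i, x))"
    unfolding P0_top_def
    using continuous_map_component_injection[OF i, of "\<lambda>i. prod_topology (subtopology X (U i)) (T0 \<Gamma>)"] by simp
  show ?thesis using continuous_map_compose[OF continuous_map_compose[OF c1 c2] f0c] by (simp add: o_def)
qed

lemma psi1: "i \<in> I \<Longrightarrow> j \<in> I \<Longrightarrow> continuous_map (subtopology X (U i \<inter> U j)) (P1_top \<Gamma> X I U) (\<lambda>w. f1 ((i, j), (w, e1)))"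
proof -
  assume i: "i \<in> I" and j: "j \<in> I"
  have ij: "(i, j) \<in> I \<times> I" using i j by simp
  have c1: "continuous_map (subtopology X (U i \<inter> U j)) (prod_topology (subtopology X (U i \<inter> U j)) (T1 \<Gamma>)) (\<lambda>w. (w, e1))"
    by (intro continuous_map_pairedI) (auto simp: tg_facts)
  have c2: "continuous_map (prod_topology (subtopology X (U i \<inter> U j)) (T1 \<Gamma>)) (P1_top \<Gamma> X I U) (\<lambda>x. ((i, j), x))"
    unfolding P1_top_def
    using continuous_map_component_injection[OF ij, of "\<lambda>(i, j). prod_topology (subtopology X (U i \<inter> U j)) (T1 \<Gamma>)"] by simp
  show ?thesis using continuous_map_compose[OF continuous_map_compose[OF c1 c2] f1c] by (simp add: o_def)
qed

lemma snd0: "continuous_map (P0_top \<Gamma> X I U) (T0 \<Gamma>) (\<lambda>p. snd (snd p))"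
  unfolding P0_top_def by (rule continuous_map_sum_from) (simp add: continuous_map_snd)
lemma snd1: "continuous_map (P1_top \<Gamma> X I U) (T1 \<Gamma>) (\<lambda>p. snd (snd p))"
  unfolding P1_top_def by (rule continuous_map_sum_from) (auto simp: continuous_map_snd)

lemma y_cont: "i \<in> I \<Longrightarrow> continuous_map (subtopology X (U i)) (T0 \<Gamma>) (y i)"
  using continuous_map_compose[OF phi0 snd0, of i] by (simp add: o_def y_def[abs_def])
lemma h_cont: "i \<in> I \<Longrightarrow> j \<in> I \<Longrightarrow> continuous_map (subtopology X (U i \<inter> U j)) (T1 \<Gamma>) (h i j)"
  using continuous_map_compose[OF psi1 snd1, of i j] by (simp add: o_def h_def[abs_def])

lemma K_open:
  assumes i: "i \<in> I" and k0: "k0 \<in> I" and S: "S \<subseteq> U i"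
  shows "openin (subtopology X S) {w \<in> topspace X \<inter> S. K i w = k0}"
proof -
  let ?S = "Sigma {k0} (\<lambda>_. topspace (prod_topology (subtopology X (U k0)) (T0 \<Gamma>)))"
  have o: "openin (P0_top \<Gamma> X I U) ?S"
    unfolding P0_top_def using openin_sum_component[OF k0, of "\<lambda>k. prod_topology (subtopology X (U k)) (T0 \<Gamma>)"] by simp
  have c: "continuous_map (subtopology X S) (P0_top \<Gamma> X I U) (\<lambda>w. f0 (i, (w, e0)))"
    using continuous_map_from_subtopology_mono[OF phi0[OF i] S] .
  have "openin (subtopology X S) {w \<in> topspace (subtopology X S). f0 (i, (w, e0)) \<in> ?S}"
    by (rule openin_continuous_map_preimage[OF c o])
  moreover have "{w \<in> topspace (subtopology X S). f0 (i, (w, e0)) \<in> ?S} = {w \<in> topspace X \<inter> S. K i w = k0}"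
  proof -
    have eqv: "f0 (i, (w, e0)) \<in> ?S \<longleftrightarrow> K i w = k0" if w: "w \<in> topspace X \<inter> S" for w
    proof -
      have wU: "w \<in> U i" using S w by auto
      show ?thesis using f0_pt[OF i wU] w by (auto simp: tg_facts)
    qed
    show ?thesis
    proof (rule subset_antisym; rule subsetI)
      fix w assume w: "w \<in> {w \<in> topspace (subtopology X S). f0 (i, (w, e0)) \<in> ?S}"
      then have w1: "w \<in> topspace X \<inter> S" "f0 (i, (w, e0)) \<in> ?S" by auto
      show "w \<in> {w \<in> topspace X \<inter> S. K i w = k0}" using eqv[OF w1(1)] w1 by blast
    next
      fix w assume w: "w \<in> {w \<in> topspace X \<inter> S. K i w = k0}"
      then have w1: "w \<in> topspace X \<inter> S" "K i w = k0" by auto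
      show "w \<in> {w \<in> topspace (subtopology X S). f0 (i, (w, e0)) \<in> ?S}" using eqv[OF w1(1)] w1 by simp
    qed
  qed
  ultimately show ?thesis by simp
qed

lemma a_cont: assumes i: "i \<in> I" shows "continuous_map (subtopology X (U i)) (T0 \<Gamma>) (a i)"
proof (rule cont_local_sub)
  fix v assume v: "v \<in> topspace X \<inter> U i"
  let ?k = "K i v"
  have k: "?k \<in> I" "v \<in> U ?k" using f0_pt[OF i] v by auto
  let ?T = "{w \<in> topspace X \<inter> U i. K i w = ?k}"
  have TU: "?T \<subseteq> U i \<inter> U ?k"
  proof
    fix w assume w: "w \<in> ?T"
    then have "w \<in> U i" "K i w = ?k" by auto
    then show "w \<in> U i \<inter> U ?k" using f0_pt(3)[OF i, of w] by simp
  qed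
  have c1: "continuous_map (subtopology X ?T) (T0 \<Gamma>) (fst c' i ?k)"
    by (rule continuous_map_from_subtopology_mono[OF dx_cont[OF i k(1)] TU])
  have c2: "continuous_map (subtopology X ?T) (T0 \<Gamma>) (y i)"
    by (rule continuous_map_from_subtopology_mono[OF y_cont[OF i]]) (use TU in blast)
  have gc: "continuous_map (subtopology X ?T) (T0 \<Gamma>) (\<lambda>w. fst c' i ?k w \<cdot> y i w)"
    by (rule cm0[OF c1 c2])
  have oT: "openin (subtopology X (U i)) ?T" by (rule K_open[OF i k(1)]) simp
  have geq: "\<forall>w\<in>?T. a i w = fst c' i ?k w \<cdot> y i w" by (simp add: a_def)
  have vT: "v \<in> ?T" using v by simp
  show "\<exists>T g. openin (subtopology X (U i)) T \<and> v \<in> T \<and> continuous_map (subtopology X T) (T0 \<Gamma>) g \<and> (\<forall>w\<in>T. a i w = g w)"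
    using oT vT gc geq by blast
qed

lemma d_cont: assumes i: "i \<in> I" and j: "j \<in> I"
  shows "continuous_map (subtopology X (U i \<inter> U j)) (subtopology (T1 \<Gamma>) E) (d i j)"
proof (rule continuous_map_into_subtopology)
  show "d i j \<in> topspace (subtopology X (U i \<inter> U j)) \<rightarrow> E" using dE[OF i j] by auto
  show "continuous_map (subtopology X (U i \<inter> U j)) (T1 \<Gamma>) (d i j)"
  proof (rule cont_local_sub)
    fix v assume v: "v \<in> topspace X \<inter> (U i \<inter> U j)"
    let ?k = "K i v" and ?l = "K j v"
    have k: "?k \<in> I" "v \<in> U ?k" "?l \<in> I" "v \<in> U ?l" using f0_pt[OF i] f0_pt[OF j] v by auto
    let ?T = "{w \<in> topspace X \<inter> (U i \<inter> U j). K i w = ?k \<and> K j w = ?l}"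
    have TU: "?T \<subseteq> U i \<inter> U j \<inter> U ?k \<inter> U ?l"
    proof
      fix w assume w: "w \<in> ?T"
      then have "w \<in> U i" "w \<in> U j" "K i w = ?k" "K j w = ?l" by auto
      then show "w \<in> U i \<inter> U j \<inter> U ?k \<inter> U ?l" using f0_pt(3)[OF i, of w] f0_pt(3)[OF j, of w] by simp
    qed
    have T1: "openin (subtopology X (U i \<inter> U j)) {w \<in> topspace X \<inter> (U i \<inter> U j). K i w = ?k}"
      by (rule K_open[OF i k(1)]) auto
    have T2: "openin (subtopology X (U i \<inter> U j)) {w \<in> topspace X \<inter> (U i \<inter> U j). K j w = ?l}"
      by (rule K_open[OF j k(3)]) auto
    have "?T = {w \<in> topspace X \<inter> (U i \<inter> U j). K i w = ?k} \<inter> {w \<in> topspace X \<inter> (U i \<inter> U j). K j w = ?l}" by auto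
    then have oT: "openin (subtopology X (U i \<inter> U j)) ?T" using openin_Int[OF T1 T2] by simp
    let ?g = "\<lambda>w. i1 (\<iota> (fst c' i ?k w \<cdot> y i w)) \<diamondop> (i1 (snd c' i j ?l w) \<diamondop> snd c' i ?k ?l w
       \<diamondop> \<iota> (fst c' i ?k w) \<diamondop> (h i j w \<diamondop> \<iota> (fst c i j w) \<diamondop> i1 (\<iota> (y j w))) \<diamondop> i1 (\<iota> (fst c' j ?l w)))
       \<diamondop> \<iota> (fst c' j ?l w \<cdot> y j w) \<diamondop> i1 (\<iota> (fst c i j w))"
    have m: "\<And>A f Y. continuous_map (subtopology X A) Y f \<Longrightarrow> ?T \<subseteq> A \<Longrightarrow> continuous_map (subtopology X ?T) Y f"
      by (rule continuous_map_from_subtopology_mono)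
    have c1: "continuous_map (subtopology X ?T) (T0 \<Gamma>) (fst c' i ?k)" by (rule m[OF dx_cont[OF i k(1)]]) (use TU in blast)
    have c2: "continuous_map (subtopology X ?T) (T0 \<Gamma>) (y i)" by (rule m[OF y_cont[OF i]]) (use TU in blast)
    have c3: "continuous_map (subtopology X ?T) (T0 \<Gamma>) (y j)" by (rule m[OF y_cont[OF j]]) (use TU in blast)
    have c4: "continuous_map (subtopology X ?T) (T1 \<Gamma>) (snd c' i j ?l)" by (rule m[OF de_cont[OF i j k(3)]]) (use TU in blast)
    have c5: "continuous_map (subtopology X ?T) (T1 \<Gamma>) (snd c' i ?k ?l)" by (rule m[OF de_cont[OF i k(1) k(3)]]) (use TU in blast)
    have c6: "continuous_map (subtopology X ?T) (T1 \<Gamma>) (h i j)" by (rule m[OF h_cont[OF i j]]) (use TU in blast)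
    have c7: "continuous_map (subtopology X ?T) (T0 \<Gamma>) (fst c i j)" by (rule m[OF cx_cont[OF i j]]) (use TU in blast)
    have c8: "continuous_map (subtopology X ?T) (T0 \<Gamma>) (fst c' j ?l)" by (rule m[OF dx_cont[OF j k(3)]]) (use TU in blast)
    have gc: "continuous_map (subtopology X ?T) (T1 \<Gamma>) ?g"
      by (intro cm1 ci1 cid cm0 c1 c2 c3 c4 c5 c6 c7 c8)
    have geq: "\<forall>w\<in>?T. d i j w = ?g w" by (auto simp: d_def M_def N_def a_def)
    show "\<exists>T g. openin (subtopology X (U i \<inter> U j)) T \<and> v \<in> T \<and> continuous_map (subtopology X T) (T1 \<Gamma>) g \<and> (\<forall>w\<in>T. d i j w = g w)"
      using oT gc geq v by blast
  qed
qed

lemma bwd: "cohomologous \<Gamma> X I U c c'"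
  unfolding cohomologous_def
proof (intro exI[of _ a] exI[of _ d] conjI ballI)
  fix i assume "i \<in> I" then show "continuous_map (subtopology X (U i)) (T0 \<Gamma>) (a i)" by (rule a_cont)
next
  fix i j assume "i \<in> I" "j \<in> I"
  then show "continuous_map (subtopology X (U i \<inter> U j)) (subtopology (T1 \<Gamma>) E) (d i j)" by (rule d_cont)
next
  fix i j v assume "i \<in> I" "j \<in> I" "v \<in> U i \<inter> U j"
  then show "fst c' i j v = a i v \<cdot> t (d i j v) \<cdot> fst c i j v \<cdot> i0 (a j v)" using hx by simp
next
  fix i j k v assume "i \<in> I" "j \<in> I" "k \<in> I" "v \<in> U i \<inter> U j \<inter> U k"
  then show "snd c' i j k v = conjact \<Gamma> (a i v) (d i k v \<diamondop> snd c i j k v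
                \<diamondop> conjact \<Gamma> (fst c i j v) (i1 (d j k v)) \<diamondop> i1 (d i j v))" using he by simp
qed

end

theorem lemma6:
  fixes \<Gamma> :: "('a, 'b) two_group" and X :: "'x topology" and I :: "'i set"
    and U :: "'i \<Rightarrow> 'x set"
    and c c' :: "('i \<Rightarrow> 'i \<Rightarrow> 'x \<Rightarrow> 'a) \<times> ('i \<Rightarrow> 'i \<Rightarrow> 'i \<Rightarrow> 'x \<Rightarrow> 'b)"
  assumes "topological_2group \<Gamma>"
    and "open_cover X I U"
    and "cech_cocycle \<Gamma> X I U c"
    and "cech_cocycle \<Gamma> X I U c'"
  shows "cohomologous \<Gamma> X I U c c' \<longleftrightarrow> (\<exists>f0 f1. bundle_morphism \<Gamma> X I U c c' f0 f1)"
proof -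
  interpret S: setting2 \<Gamma> X I U c c'
    by (intro setting2.intro setting.intro setting_axioms.intro setting2_axioms.intro tg.intro assms)
  show ?thesis
  proof
    assume "cohomologous \<Gamma> X I U c c'"
    then show "\<exists>f0 f1. bundle_morphism \<Gamma> X I U c c' f0 f1" by (rule S.fwd)
  next
    assume "\<exists>f0 f1. bundle_morphism \<Gamma> X I U c c' f0 f1"
    then obtain f0 f1 where bm: "bundle_morphism \<Gamma> X I U c c' f0 f1" by blast
    interpret B: bwd_setting \<Gamma> X I U c c' f0 f1
      by (intro bwd_setting.intro bwd_setting_axioms.intro bm S.setting2_axioms)
    show "cohomologous \<Gamma> X I U c c'" by (rule B.bwd)
  qed
qed

end
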